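(* Let $X,h,\Gamma^\pm,\Phi^t_{\mathcal X_h}$ be as below. Let $\mathcal U^\pm=\tilde{\mathcal U}^\pm\times\mathbb R$ be conical neighborhoods of $\Gamma^\pm$ with $\mathcal U^+$ positively invariant and $\mathcal U^-$ negatively invariant under the flow, $\delta>0$, and $k,\mathtt m\in C^\infty(T^*\mathbb T\setminus\{\xi=0\})$ positively homogeneous of degree one with $k=\pm|\xi|$ on $\Gamma^\pm$, $\{h,k\}\ge\delta|\xi|$ on $\mathcal U^+\cup\mathcal U^-$, $\mathtt m=\{h,k\}$ on $\mathcal U^+\cup\mathcal U^-$ and $\mathtt m\ge\frac\delta2|\xi|$ everywhere. For $z\in B(\Gamma^\pm):=T^*\mathbb T\setminus\Gamma^\mp$ (with $\xi\ne0$) define $$\ell^\pm(z):=\lim_{t\to\pm\infty}\Big[k(\Phi^t_{\mathcal X_h}(z))-\int_0^t\mathtt m(\Phi^s_{\mathcal X_h}(z))\,ds\Big].$$ Then (i) $\ell^\pm$ is well defined on $B(\Gamma^\pm)$, smooth, positively homogeneous of degree one, and $\ell^\pm=k$ on $\Gamma^\pm$; (ii) $\{h,\ell^\pm\}(x,\xi)\ge\frac\delta2|\xi|$ for all $(x,\xi)\in B(\Gamma^\pm)$ with $\xi\neq0$.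
   Context: $\mathbb T:=\mathbb R/2\pi\mathbb Z$; $X\in C^\infty(\mathbb T;\mathbb R)$ has at least one zero and no degenerate zero; $h(x,\xi)=\xi X(x)$ on $T^*\mathbb T\simeq\mathbb T\times\mathbb R$, with Hamiltonian vector field $\mathcal X_h=(X(x),-\xi X'(x))$ and complete flow $\Phi^t_{\mathcal X_h}$. $K^+:=\{X=0,X'<0\}$, $K^-:=\{X=0,X'>0\}$, $\Gamma^\pm=K^\pm\times\mathbb R$. Poisson bracket $\{h,f\}:=\partial_\xi h\partial_xf-\partial_xh\partial_\xi f$. Positive homogeneity of degree $\rho$: $f(x,\lambda\xi)=\lambda^\rho f(x,\xi)$ for $\lambda>0$. *)

theory Defs
  imports "HOL-Analysis.Analysis"
begin

text \<open>The circle T = R/2piZ is represented by 2pi-periodic functions on R;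
  the cotangent bundle T*T = T x R by pairs (x, xi) :: real * real,
  with functions 2pi-periodic in x.\<close>

fun C_n_on :: "nat \<Rightarrow> 'a::real_normed_vector set \<Rightarrow> ('a \<Rightarrow> real) \<Rightarrow> bool" where
  "C_n_on 0 S f = continuous_on S f"
| "C_n_on (Suc n) S f =
     (\<exists>D. (\<forall>z\<in>S. (f has_derivative D z) (at z)) \<and> (\<forall>v. C_n_on n S (\<lambda>z. D z v)))"

definition smooth_on :: "'a::real_normed_vector set \<Rightarrow> ('a \<Rightarrow> real) \<Rightarrow> bool" where
  "smooth_on S f \<longleftrightarrow> (\<forall>n. C_n_on n S f)"

definition periodic_x :: "(real \<times> real \<Rightarrow> real) \<Rightarrow> bool" where
  "periodic_x f \<longleftrightarrow> (\<forall>x \<xi>. f (x + 2*pi, \<xi>) = f (x, \<xi>))"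

definition pos_homog :: "real \<Rightarrow> (real \<times> real) set \<Rightarrow> (real \<times> real \<Rightarrow> real) \<Rightarrow> bool" where
  "pos_homog \<rho> S f \<longleftrightarrow>
     (\<forall>x \<xi> c. (x, \<xi>) \<in> S \<longrightarrow> c > 0 \<longrightarrow> f (x, c * \<xi>) = c powr \<rho> * f (x, \<xi>))"

definition poisson :: "(real \<times> real \<Rightarrow> real) \<Rightarrow> (real \<times> real \<Rightarrow> real) \<Rightarrow> real \<times> real \<Rightarrow> real" where
  "poisson h f z =
     deriv (\<lambda>\<eta>. h (fst z, \<eta>)) (snd z) * deriv (\<lambda>y. f (y, snd z)) (fst z)
   - deriv (\<lambda>y. h (y, snd z)) (fst z) * deriv (\<lambda>\<eta>. f (fst z, \<eta>)) (snd z)"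

definition hamH :: "(real \<Rightarrow> real) \<Rightarrow> real \<times> real \<Rightarrow> real" where
  "hamH X z = snd z * X (fst z)"

definition hamV :: "(real \<Rightarrow> real) \<Rightarrow> real \<times> real \<Rightarrow> real \<times> real" where
  "hamV X z = (X (fst z), - snd z * deriv X (fst z))"

definition is_flow :: "(real \<Rightarrow> real) \<Rightarrow> (real \<Rightarrow> real \<times> real \<Rightarrow> real \<times> real) \<Rightarrow> bool" where
  "is_flow X \<Phi> \<longleftrightarrow> (\<forall>z. \<Phi> 0 z = z \<and>
      (\<forall>t. ((\<lambda>s. \<Phi> s z) has_vector_derivative hamV X (\<Phi> t z)) (at t)))"

definition Kplus :: "(real \<Rightarrow> real) \<Rightarrow> real set" where
  "Kplus X = {x. X x = 0 \<and> deriv X x < 0}"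

definition Kminus :: "(real \<Rightarrow> real) \<Rightarrow> real set" where
  "Kminus X = {x. X x = 0 \<and> deriv X x > 0}"

definition sint :: "(real \<Rightarrow> real) \<Rightarrow> real \<Rightarrow> real" where
  "sint f t = (if 0 \<le> t then integral {0..t} f else - integral {t..0} f)"

definition periodic_set :: "real set \<Rightarrow> bool" where
  "periodic_set A \<longleftrightarrow> (\<forall>x. x \<in> A \<longleftrightarrow> x + 2*pi \<in> A)"

end

theory Submission
  imports Defs
begin

lemma C_n_mono: "C_n_on n S f \<Longrightarrow> T \<subseteq> S \<Longrightarrow> C_n_on n T f"
proof (induction n arbitrary: f)
  case 0 then show ?case by (auto intro: continuous_on_subset)
next
  case (Suc n)
  then obtain D where "\<forall>z\<in>S. (f has_derivative D z) (at z)" "\<forall>v. C_n_on n S (\<lambda>z. D z v)" by auto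
  then show ?case using Suc by (auto intro!: exI[of _ D])
qed

lemma C_n_Suc_imp: "C_n_on (Suc n) S f \<Longrightarrow> C_n_on n S f"
proof (induction n arbitrary: f)
  case 0
  then obtain D where "\<forall>z\<in>S. (f has_derivative D z) (at z)" by auto
  then show ?case
    by (auto intro!: continuous_at_imp_continuous_on has_derivative_continuous)
next
  case (Suc n)
  then obtain D where "\<forall>z\<in>S. (f has_derivative D z) (at z)" "\<forall>v. C_n_on (Suc n) S (\<lambda>z. D z v)"
    by (metis C_n_on.simps(2))
  then show ?case using Suc by (auto intro!: exI[of _ D])
qed

lemma C_n_le: "C_n_on n S f \<Longrightarrow> m \<le> n \<Longrightarrow> C_n_on m S f"
proof (induction n)
  case 0 then show ?case by simp
next
  case (Suc n)
  then show ?case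
    by (metis C_n_Suc_imp le_Suc_eq)
qed

lemma C_n_const: "C_n_on n S (\<lambda>z. c)"
proof (induction n arbitrary: c)
  case 0 then show ?case by simp
next
  case (Suc n)
  then show ?case by (auto intro!: exI[of _ "\<lambda>z v. 0"])
qed

lemma C_n_add: "C_n_on n S f \<Longrightarrow> C_n_on n S g \<Longrightarrow> C_n_on n S (\<lambda>z. f z + g z)"
proof (induction n arbitrary: f g)
  case 0 then show ?case by (auto intro: continuous_intros)
next
  case (Suc n)
  obtain Df where f: "\<forall>z\<in>S. (f has_derivative Df z) (at z)" "\<forall>v. C_n_on n S (\<lambda>z. Df z v)"
    using Suc.prems by auto
  obtain Dg where g: "\<forall>z\<in>S. (g has_derivative Dg z) (at z)" "\<forall>v. C_n_on n S (\<lambda>z. Dg z v)"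
    using Suc.prems by auto
  show ?case
    using f g by (auto intro!: exI[of _ "\<lambda>z v. Df z v + Dg z v"] has_derivative_add Suc.IH)
qed

lemma C_n_mult: "C_n_on n S f \<Longrightarrow> C_n_on n S g \<Longrightarrow> C_n_on n S (\<lambda>z. f z * g z)"
proof (induction n arbitrary: f g)
  case 0 then show ?case by (auto intro: continuous_intros)
next
  case (Suc n)
  obtain Df where f: "\<forall>z\<in>S. (f has_derivative Df z) (at z)" "\<forall>v. C_n_on n S (\<lambda>z. Df z v)"
    using Suc.prems by auto
  obtain Dg where g: "\<forall>z\<in>S. (g has_derivative Dg z) (at z)" "\<forall>v. C_n_on n S (\<lambda>z. Dg z v)"
    using Suc.prems by auto
  have fn: "C_n_on n S f" "C_n_on n S g" using Suc.prems C_n_Suc_imp by blast+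
  show ?case
    using f g fn by (auto intro!: exI[of _ "\<lambda>z v. f z * Dg z v + Df z v * g z"] has_derivative_mult
        C_n_add Suc.IH)
qed

lemma C_n_cmult: "C_n_on n S f \<Longrightarrow> C_n_on n S (\<lambda>z. c * f z)"
  using C_n_mult[OF C_n_const] .

lemma C_n_neg: "C_n_on n S f \<Longrightarrow> C_n_on n S (\<lambda>z. - f z)"
  using C_n_cmult[of n S f "-1"] by simp

lemma C_n_diff: "C_n_on n S f \<Longrightarrow> C_n_on n S g \<Longrightarrow> C_n_on n S (\<lambda>z. f z - g z)"
  using C_n_add[OF _ C_n_neg, of n S f g] by simp

lemma C_n_inverse: "C_n_on n S f \<Longrightarrow> \<forall>z\<in>S. f z \<noteq> 0 \<Longrightarrow> C_n_on n S (\<lambda>z. inverse (f z))"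
proof (induction n arbitrary: f)
  case 0 then show ?case by (auto intro!: continuous_intros)
next
  case (Suc n)
  obtain Df where f: "\<forall>z\<in>S. (f has_derivative Df z) (at z)" "\<forall>v. C_n_on n S (\<lambda>z. Df z v)"
    using Suc.prems by auto
  have fn: "C_n_on n S f" using Suc.prems C_n_Suc_imp by blast
  have iv: "C_n_on n S (\<lambda>z. inverse (f z))" using Suc.IH[OF fn] Suc.prems by blast
  show ?case
    apply (rule C_n_on.simps(2)[THEN iffD2])
    apply (rule exI[of _ "\<lambda>z v. - (inverse (f z) * Df z v * inverse (f z))"])
    using Suc.prems f iv
    by (auto intro!: has_derivative_inverse C_n_neg C_n_mult)
qed

lemma C_n_local:
  assumes "\<forall>z\<in>S. \<exists>W g. open W \<and> z \<in> W \<and> W \<subseteq> S \<and> C_n_on n W g \<and> (\<forall>w\<in>W. f w = g w)"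
  shows "C_n_on n S f"
  using assms
proof (induction n arbitrary: f)
  case 0
  have "continuous_on S f"
  proof (rule continuous_at_imp_continuous_on, rule ballI)
    fix z assume "z \<in> S"
    obtain W g where W: "open W" "z \<in> W" "continuous_on W g" "\<forall>w\<in>W. f w = g w"
      using bspec[OF 0 \<open>z \<in> S\<close>] by auto
    then have "isCont g z" using continuous_on_eq_continuous_at[of W g] by blast
    then show "isCont f z"
    proof -
      have "eventually (\<lambda>w. f w = g w) (nhds z)"
        unfolding eventually_nhds using W by blast
      then show ?thesis using \<open>isCont g z\<close> isCont_cong by blast
    qed
  qed
  then show ?case by simp
next
  case (Suc n)
  have ex: "\<exists>D. (f has_derivative D) (at z)" if zS: "z \<in> S" for z
  proof -
    obtain W g where W: "open W" "z \<in> W" "C_n_on (Suc n) W g" "\<forall>w\<in>W. f w = g w"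
      using bspec[OF Suc.prems zS] by blast
    then obtain Dg where "(g has_derivative Dg z) (at z)" using W(2) by (auto simp: C_n_on.simps(2))
    then show ?thesis using W has_derivative_transform_within_open[of g "Dg z" z UNIV W f]
      by auto
  qed
  define D where "D z = (SOME D. (f has_derivative D) (at z))" for z
  have D: "(f has_derivative D z) (at z)" if zS: "z \<in> S" for z
    using someI_ex[OF ex[OF that]] unfolding D_def .
  show ?case
  proof (rule C_n_on.simps(2)[THEN iffD2], rule exI[of _ D], intro conjI ballI allI)
    fix z assume "z \<in> S" then show "(f has_derivative D z) (at z)" by (rule D)
  next
    fix v
    show "C_n_on n S (\<lambda>z. D z v)"
    proof (rule Suc.IH, rule ballI)
      fix z assume "z \<in> S"
      obtain W g where W: "open W" "z \<in> W" "W \<subseteq> S" "C_n_on (Suc n) W g" "\<forall>w\<in>W. f w = g w"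
        using bspec[OF Suc.prems \<open>z \<in> S\<close>] by blast
      then obtain Dg where Dg: "\<forall>w\<in>W. (g has_derivative Dg w) (at w)" "C_n_on n W (\<lambda>w. Dg w v)"
        by (auto simp del: C_n_on.simps simp: C_n_on.simps(2))
      have "D w = Dg w" if "w \<in> W" for w
      proof (rule has_derivative_unique[OF D])
        show "w \<in> S" using that W by auto
        show "(f has_derivative Dg w) (at w)"
          using Dg(1) that W has_derivative_transform_within_open[of g "Dg w" w UNIV W f] by auto
      qed
      then show "\<exists>W g. open W \<and> z \<in> W \<and> W \<subseteq> S \<and> C_n_on n W g \<and> (\<forall>w\<in>W. D w v = g w)"
        using W Dg by (intro exI[of _ W] exI[of _ "\<lambda>w. Dg w v"]) auto
    qed
  qed
qed

lemma C_n_slice: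
  fixes f :: "'a::real_normed_vector \<times> 'b::real_normed_vector \<Rightarrow> real"
  shows "C_n_on n S f \<Longrightarrow> C_n_on n {y. (y, \<sigma>) \<in> S} (\<lambda>y. f (y, \<sigma>))"
proof (induction n arbitrary: f)
  case 0
  then show ?case
    by (auto intro!: continuous_on_compose2[of S f] continuous_intros)
next
  case (Suc n)
  obtain D where D: "\<forall>z\<in>S. (f has_derivative D z) (at z)" "\<forall>v. C_n_on n S (\<lambda>z. D z v)"
    using Suc.prems by auto
  have "((\<lambda>y. f (y, \<sigma>)) has_derivative (\<lambda>v. D (y, \<sigma>) (v, 0))) (at y)" if "(y, \<sigma>) \<in> S" for y
  proof -
    have "((\<lambda>y. (y, \<sigma>)) has_derivative (\<lambda>v. (v, 0))) (at y)"
      by (auto intro!: derivative_eq_intros)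
    from has_derivative_compose[OF this, of f "D (y, \<sigma>)"] D that show ?thesis by auto
  qed
  moreover have "C_n_on n {y. (y, \<sigma>) \<in> S} (\<lambda>y. D (y, \<sigma>) (v, 0))" for v
    using Suc.IH[of "\<lambda>z. D z (v, 0)"] D by auto
  ultimately show ?case by (auto intro!: exI[of _ "\<lambda>y v. D (y, \<sigma>) (v, 0)"])
qed

lemma C_n_fst:
  fixes b :: "'a::real_normed_vector \<Rightarrow> real"
  shows "C_n_on n J b \<Longrightarrow> C_n_on n {z :: 'a \<times> 'b::real_normed_vector. fst z \<in> J} (\<lambda>z. b (fst z))"
proof (induction n arbitrary: b)
  case 0
  then show ?case
    by (auto intro!: continuous_on_compose2[of J b] continuous_intros)
next
  case (Suc n)
  obtain D where D: "\<forall>z\<in>J. (b has_derivative D z) (at z)" "\<forall>v. C_n_on n J (\<lambda>z. D z v)"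
    using Suc.prems by auto
  have "((\<lambda>z. b (fst z)) has_derivative (\<lambda>v. D (fst z) (fst v))) (at z)" if "fst z \<in> J" for z :: "'a \<times> 'b"
  proof -
    have "(fst has_derivative fst) (at z)"
      by (auto intro!: derivative_eq_intros)
    from has_derivative_compose[OF this, of b "D (fst z)"] D that show ?thesis by auto
  qed
  moreover have "C_n_on n {z :: 'a \<times> 'b. fst z \<in> J} (\<lambda>z. D (fst z) (fst v))" for v :: "'a \<times> 'b"
    using Suc.IH[of "\<lambda>x. D x (fst v)"] D by auto
  ultimately show ?case by (auto intro!: exI[of _ "\<lambda>z v. D (fst z) (fst v)"])
qed

lemma C_n_snd: "C_n_on n S (\<lambda>z::'a::real_normed_vector \<times> real. snd z)"
proof (cases n)
  case 0 then show ?thesis by (auto intro!: continuous_intros)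
next
  case (Suc n')
  show ?thesis unfolding Suc
    by (auto intro!: exI[of _ "\<lambda>z v. snd v"] derivative_eq_intros C_n_const)
qed

lemma C_n_antideriv:
  fixes P F :: "real \<Rightarrow> real"
  assumes "\<forall>x\<in>J. (P has_real_derivative F x) (at x)" "C_n_on n J F"
  shows "C_n_on (Suc n) J P"
  using assms
  by (auto simp: has_field_derivative_def intro!: exI[of _ "\<lambda>x h. F x * h"] C_n_mult C_n_const)

locale half =
  fixes X :: "real \<Rightarrow> real" and \<Phi> :: "real \<Rightarrow> real \<times> real \<Rightarrow> real \<times> real"
    and Up :: "real set" and \<delta> :: real and k m :: "real \<times> real \<Rightarrow> real"
  assumes X_smooth: "smooth_on UNIV X"
    and X_per: "\<forall>x. X (x + 2*pi) = X x"
    and X_zero: "\<exists>x. X x = 0"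
    and X_nondeg: "\<forall>x. X x = 0 \<longrightarrow> deriv X x \<noteq> 0"
    and flow: "is_flow X \<Phi>"
    and Up_open: "open Up" and Up_nbhd: "Kplus X \<subseteq> Up"
    and Up_inv: "\<forall>z t. fst z \<in> Up \<longrightarrow> t \<ge> 0 \<longrightarrow> fst (\<Phi> t z) \<in> Up"
    and \<delta>_pos: "\<delta> > 0"
    and k_smooth: "smooth_on {z. snd z \<noteq> 0} k"
    and k_hom: "pos_homog 1 {z. snd z \<noteq> 0} k"
    and m_smooth: "smooth_on {z. snd z \<noteq> 0} m"
    and m_hom: "pos_homog 1 {z. snd z \<noteq> 0} m"
    and m_eq: "\<forall>x \<xi>. x \<in> Up \<longrightarrow> \<xi> \<noteq> 0 \<longrightarrow> m (x, \<xi>) = poisson (hamH X) k (x, \<xi>)"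
    and m_ge: "\<forall>x \<xi>. \<xi> \<noteq> 0 \<longrightarrow> m (x, \<xi>) \<ge> \<delta> / 2 * \<bar>\<xi>\<bar>"
begin

lemma X_Cn: "C_n_on n UNIV X"
  using X_smooth smooth_on_def by blast

lemma X_der: "(X has_real_derivative deriv X x) (at x)"
proof -
  obtain D where "\<forall>z. (X has_derivative D z) (at z)"
    using X_Cn[of 1] by auto
  then have "X differentiable (at x)" unfolding differentiable_def by blast
  then show ?thesis using DERIV_deriv_iff_real_differentiable by blast
qed

lemma X_isCont: "isCont X x"
  using X_der DERIV_isCont by blast

lemma X_cont: "continuous_on S X"
  using X_isCont continuous_at_imp_continuous_on by blast

lemma Xd_cont: "continuous_on S (deriv X)"
proof -
  obtain D where D: "\<forall>z. (X has_derivative D z) (at z)" "C_n_on 0 UNIV (\<lambda>z. D z 1)"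
    using X_Cn[of 1] by auto
  have "D z = (\<lambda>h. deriv X z * h)" for z
    using has_derivative_unique[OF D(1)[rule_format, of z] X_der[of z, unfolded has_field_derivative_def]]
    by simp
  then have "continuous_on UNIV (deriv X)" using D(2) by simp
  then show ?thesis using continuous_on_subset by blast
qed

lemma m_cont: "continuous_on {z. snd z \<noteq> 0} m"
  using m_smooth unfolding smooth_on_def by (metis C_n_on.simps(1))

lemma k_cont: "continuous_on {z. snd z \<noteq> 0} k"
  using k_smooth unfolding smooth_on_def by (metis C_n_on.simps(1))

lemma k_der: "snd p \<noteq> 0 \<Longrightarrow> \<exists>D. (k has_derivative D) (at p)"
proof -
  assume p: "snd p \<noteq> 0"
  obtain D where "\<forall>z\<in>{z. snd z \<noteq> 0}. (k has_derivative D z) (at z)"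
    using k_smooth[unfolded smooth_on_def, rule_format, of 1] by auto
  then show ?thesis using p by (metis mem_Collect_eq)
qed

lemma flow0: "\<Phi> 0 z = z"
  using flow unfolding is_flow_def by blast

lemma flow_vd: "((\<lambda>s. \<Phi> s z) has_vector_derivative hamV X (\<Phi> t z)) (at t)"
  using flow unfolding is_flow_def by blast

lemma flow_x: "((\<lambda>s. fst (\<Phi> s z)) has_real_derivative X (fst (\<Phi> t z))) (at t)"
proof -
  have "((\<lambda>s. fst (\<Phi> s z)) has_derivative (\<lambda>h. fst (h *\<^sub>R hamV X (\<Phi> t z)))) (at t)"
    using has_derivative_fst[OF flow_vd[unfolded has_vector_derivative_def]] .
  then show ?thesis
    by (simp add: has_real_derivative_iff_has_vector_derivative has_vector_derivative_def hamV_def)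
qed

lemma flow_xi: "((\<lambda>s. snd (\<Phi> s z)) has_real_derivative - snd (\<Phi> t z) * deriv X (fst (\<Phi> t z))) (at t)"
proof -
  have "((\<lambda>s. snd (\<Phi> s z)) has_derivative (\<lambda>h. snd (h *\<^sub>R hamV X (\<Phi> t z)))) (at t)"
    using has_derivative_snd[OF flow_vd[unfolded has_vector_derivative_def]] .
  then show ?thesis
    by (simp add: has_real_derivative_iff_has_vector_derivative has_vector_derivative_def hamV_def)
qed

lemma flow_x_cont: "continuous_on S (\<lambda>s. fst (\<Phi> s z))"
  using flow_x DERIV_isCont continuous_at_imp_continuous_on by blast

lemma flow_xi_cont: "continuous_on S (\<lambda>s. snd (\<Phi> s z))"
  using flow_xi DERIV_isCont continuous_at_imp_continuous_on by blast

lemma flow_cont: "continuous_on S (\<lambda>s. \<Phi> s z)"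
proof -
  have "continuous_on S (\<lambda>s. (fst (\<Phi> s z), snd (\<Phi> s z)))"
    by (rule continuous_on_Pair[OF flow_x_cont flow_xi_cont])
  then show ?thesis by simp
qed

lemma conserv: "snd (\<Phi> t z) * X (fst (\<Phi> t z)) = snd z * X (fst z)"
proof -
  have "((\<lambda>s. snd (\<Phi> s z) * X (fst (\<Phi> s z))) has_real_derivative 0) (at s)" for s
  proof -
    have "((\<lambda>s. snd (\<Phi> s z) * X (fst (\<Phi> s z))) has_real_derivative
        (- snd (\<Phi> s z) * deriv X (fst (\<Phi> s z))) * X (fst (\<Phi> s z))
        + snd (\<Phi> s z) * (deriv X (fst (\<Phi> s z)) * X (fst (\<Phi> s z)))) (at s)"
      using DERIV_mult[OF flow_xi[of z s] DERIV_chain2[OF X_der flow_x[of z s]]] by simp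
    then show ?thesis by (simp add: algebra_simps)
  qed
  then have "snd (\<Phi> t z) * X (fst (\<Phi> t z)) = snd (\<Phi> 0 z) * X (fst (\<Phi> 0 z))"
    using DERIV_isconst_all[of "\<lambda>s. snd (\<Phi> s z) * X (fst (\<Phi> s z))" t 0] by blast
  then show ?thesis by (simp add: flow0)
qed

lemma xi_nz:
  assumes "snd z \<noteq> 0" "t \<ge> 0"
  shows "snd (\<Phi> t z) \<noteq> 0"
proof -
  have "compact ((\<lambda>s. deriv X (fst (\<Phi> s z))) ` {0..t})"
    by (intro compact_continuous_image continuous_on_compose2[OF Xd_cont flow_x_cont]) auto
  then obtain Bd where "\<forall>y\<in>(\<lambda>s. deriv X (fst (\<Phi> s z))) ` {0..t}. \<bar>y\<bar> \<le> Bd"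
    using compact_imp_bounded bounded_real by blast
  then have B: "\<forall>s\<in>{0..t}. \<bar>deriv X (fst (\<Phi> s z))\<bar> \<le> Bd" by blast
  define w :: "real \<Rightarrow> real" where "w = (\<lambda>s. snd (\<Phi> s z) * snd (\<Phi> s z) * exp (2 * Bd * s))"
  have "w 0 \<le> w t"
  proof (rule DERIV_nonneg_imp_nondecreasing[OF assms(2)])
    fix s assume s: "0 \<le> s" "s \<le> t"
    have e: "((\<lambda>s. exp (2 * Bd * s)) has_real_derivative exp (2 * Bd * s) * (2 * Bd)) (at s)"
      by (auto intro!: derivative_eq_intros)
    have d: "(w has_real_derivative
        2 * (snd (\<Phi> s z) * snd (\<Phi> s z)) * exp (2 * Bd * s) * (Bd - deriv X (fst (\<Phi> s z)))) (at s)"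
      unfolding w_def
      by (rule DERIV_cong[OF DERIV_mult[OF DERIV_mult[OF flow_xi[of z s] flow_xi[of z s]] e]])
        (simp add: algebra_simps)
    have "2 * (snd (\<Phi> s z) * snd (\<Phi> s z)) * exp (2 * Bd * s) * (Bd - deriv X (fst (\<Phi> s z))) \<ge> 0"
    proof -
      have "Bd - deriv X (fst (\<Phi> s z)) \<ge> 0" using B s abs_le_iff by fastforce
      moreover have "snd (\<Phi> s z) * snd (\<Phi> s z) \<ge> 0" by simp
      ultimately show ?thesis by simp
    qed
    then show "\<exists>y. (w has_real_derivative y) (at s) \<and> 0 \<le> y" using d by blast
  qed
  then have "snd (\<Phi> t z) * snd (\<Phi> t z) * exp (2 * Bd * t) > 0"
    using assms by (simp add: w_def flow0) (smt (verit) not_real_square_gt_zero)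
  then show ?thesis by auto
qed

lemma X_flow_nz:
  assumes "snd z \<noteq> 0" "X (fst z) \<noteq> 0" "t \<ge> 0"
  shows "X (fst (\<Phi> t z)) \<noteq> 0"
  using conserv[of t z] assms by auto

end

lemma partials:
  fixes f :: "real \<times> real \<Rightarrow> real"
  assumes "(f has_derivative D) (at (x, \<xi>))"
  shows "((\<lambda>y. f (y, \<xi>)) has_real_derivative D (1, 0)) (at x)"
    and "((\<lambda>\<eta>. f (x, \<eta>)) has_real_derivative D (0, 1)) (at \<xi>)"
    and "D (a, b) = a * D (1, 0) + b * D (0, 1)"
proof -
  have lin: "linear D" using assms has_derivative_linear by blast
  have sc: "D (a, b) = a * D (1, 0) + b * D (0, 1)" for a b
  proof -
    have "D (a *\<^sub>R (1, 0) + b *\<^sub>R (0, 1)) = a *\<^sub>R D (1, 0) + b *\<^sub>R D (0, 1)"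
      by (simp only: linear_add[OF lin] linear_scale[OF lin])
    then show ?thesis by simp
  qed
  show "D (a, b) = a * D (1, 0) + b * D (0, 1)" by (rule sc)
  have "((\<lambda>y. (y, \<xi>)) has_derivative (\<lambda>h. (h, 0))) (at x)"
    by (auto intro!: derivative_eq_intros)
  from has_derivative_compose[OF this assms]
  have "((\<lambda>y. f (y, \<xi>)) has_derivative (\<lambda>h. D (h, 0))) (at x)" by simp
  moreover have "(\<lambda>h. D (h, 0)) = (\<lambda>h. D (1, 0) * h)"
  proof (rule ext)
    fix h show "D (h, 0) = D (1, 0) * h" using sc[of h 0] by (simp add: mult.commute)
  qed
  ultimately show "((\<lambda>y. f (y, \<xi>)) has_real_derivative D (1, 0)) (at x)"
    by (simp add: has_field_derivative_def)
  have "((\<lambda>\<eta>. (x, \<eta>)) has_derivative (\<lambda>h. (0, h))) (at \<xi>)"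
    by (auto intro!: derivative_eq_intros)
  from has_derivative_compose[OF this assms]
  have "((\<lambda>\<eta>. f (x, \<eta>)) has_derivative (\<lambda>h. D (0, h))) (at \<xi>)" by simp
  moreover have "(\<lambda>h. D (0, h)) = (\<lambda>h. D (0, 1) * h)"
  proof (rule ext)
    fix h show "D (0, h) = D (0, 1) * h" using sc[of 0 h] by (simp add: mult.commute)
  qed
  ultimately show "((\<lambda>\<eta>. f (x, \<eta>)) has_real_derivative D (0, 1)) (at \<xi>)"
    by (simp add: has_field_derivative_def)
qed

lemma poisson_hamH:
  assumes "(X has_real_derivative X') (at x)"
  shows "poisson (hamH X) f (x, \<xi>) =
      X x * deriv (\<lambda>y. f (y, \<xi>)) x - \<xi> * X' * deriv (\<lambda>\<eta>. f (x, \<eta>)) \<xi>"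
proof -
  have "deriv (\<lambda>\<eta>. \<eta> * X x) \<xi> = X x"
    by (rule DERIV_imp_deriv) (auto intro!: derivative_eq_intros)
  moreover have "deriv (\<lambda>y. \<xi> * X y) x = \<xi> * X'"
    by (rule DERIV_imp_deriv) (rule DERIV_cmult[OF assms])
  ultimately show ?thesis by (simp add: poisson_def hamH_def)
qed

lemma poisson_hamH_D:
  assumes "(X has_real_derivative X') (at x)" "(f has_derivative D) (at (x, \<xi>))"
  shows "poisson (hamH X) f (x, \<xi>) = D (X x, - \<xi> * X')"
proof -
  have "deriv (\<lambda>y. f (y, \<xi>)) x = D (1, 0)"
    using partials(1)[OF assms(2)] by (rule DERIV_imp_deriv)
  moreover have "deriv (\<lambda>\<eta>. f (x, \<eta>)) \<xi> = D (0, 1)"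
    using partials(2)[OF assms(2)] by (rule DERIV_imp_deriv)
  moreover have "D (X x, - \<xi> * X') = X x * D (1, 0) + (- \<xi> * X') * D (0, 1)"
    by (rule partials(3)[OF assms(2)])
  ultimately show ?thesis using poisson_hamH[OF assms(1), of f \<xi>] by simp
qed

context half begin

definition E :: "real \<times> real \<Rightarrow> real \<Rightarrow> real" where
  "E z t = k (\<Phi> t z) - sint (\<lambda>s. m (\<Phi> s z)) t"

lemma k_chain:
  assumes "snd (\<Phi> s z) \<noteq> 0"
  shows "((\<lambda>s. k (\<Phi> s z)) has_real_derivative poisson (hamH X) k (\<Phi> s z)) (at s)"
proof -
  obtain D where D: "(k has_derivative D) (at (\<Phi> s z))" using k_der assms by blast
  have "((\<lambda>s. k (\<Phi> s z)) has_derivative (\<lambda>h. D (h *\<^sub>R hamV X (\<Phi> s z)))) (at s)"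
    using has_derivative_compose[OF flow_vd[unfolded has_vector_derivative_def] D] by simp
  moreover have "(\<lambda>h. D (h *\<^sub>R hamV X (\<Phi> s z))) = (\<lambda>h. D (hamV X (\<Phi> s z)) * h)"
    using has_derivative_linear[OF D] by (auto simp: fun_eq_iff linear_scale)
  moreover have "D (hamV X (\<Phi> s z)) = poisson (hamH X) k (\<Phi> s z)"
    using poisson_hamH_D[OF X_der, of k D "fst (\<Phi> s z)" "snd (\<Phi> s z)"] D
    by (simp add: hamV_def)
  ultimately show ?thesis by (simp add: has_field_derivative_def)
qed

lemma m_flow_cont:
  assumes "snd z \<noteq> 0" "0 \<le> a"
  shows "continuous_on {a..b} (\<lambda>s. m (\<Phi> s z))"
proof (rule continuous_on_compose2[OF m_cont flow_cont])
  show "(\<lambda>s. \<Phi> s z) ` {a..b} \<subseteq> {z. snd z \<noteq> 0}"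
  proof (rule subsetI)
    fix y assume "y \<in> (\<lambda>s. \<Phi> s z) ` {a..b}"
    then obtain s where s: "s \<in> {a..b}" "y = \<Phi> s z" by blast
    then have "snd (\<Phi> s z) \<noteq> 0" using xi_nz[OF assms(1), of s] assms(2) by simp
    then show "y \<in> {z. snd z \<noteq> 0}" using s by simp
  qed
qed

lemma E_const:
  assumes z: "snd z \<noteq> 0" and T: "0 \<le> T" "T \<le> t"
    and up: "\<forall>s\<in>{T..t}. fst (\<Phi> s z) \<in> Up"
  shows "E z t = E z T"
proof -
  let ?g = "\<lambda>s. m (\<Phi> s z)"
  have int: "?g integrable_on {0..t}"
    by (rule integrable_continuous_real, rule m_flow_cont) (use z in auto)
  have comb: "integral {0..T} ?g + integral {T..t} ?g = integral {0..t} ?g"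
    by (rule Henstock_Kurzweil_Integration.integral_combine[OF T int])
  have "(?g has_integral (k (\<Phi> t z) - k (\<Phi> T z))) {T..t}"
  proof (rule fundamental_theorem_of_calculus[OF T(2)])
    fix s assume s: "s \<in> {T..t}"
    have nz: "snd (\<Phi> s z) \<noteq> 0" using xi_nz z s T by auto
    have "poisson (hamH X) k (\<Phi> s z) = m (\<Phi> s z)"
    proof -
      have "fst (\<Phi> s z) \<in> Up" using up s by blast
      then have "m (fst (\<Phi> s z), snd (\<Phi> s z)) = poisson (hamH X) k (fst (\<Phi> s z), snd (\<Phi> s z))"
        using m_eq nz by blast
      then show ?thesis by simp
    qed
    then show "((\<lambda>s. k (\<Phi> s z)) has_vector_derivative ?g s) (at s within {T..t})"
      using k_chain[OF nz] by (auto simp: has_real_derivative_iff_has_vector_derivative[symmetric]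
          intro: has_field_derivative_at_within)
  qed
  then have "integral {T..t} ?g = k (\<Phi> t z) - k (\<Phi> T z)" by (rule integral_unique)
  then show ?thesis using comb T by (simp add: E_def sint_def)
qed

lemma E_lim_after:
  assumes z: "snd z \<noteq> 0" and T: "0 \<le> T" and up: "\<forall>s\<ge>T. fst (\<Phi> s z) \<in> Up"
  shows "(E z \<longlongrightarrow> E z T) at_top"
proof (rule Lim_transform_eventually[OF tendsto_const])
  show "\<forall>\<^sub>F t in at_top. E z T = E z t"
    unfolding eventually_at_top_linorder
  proof (rule exI[of _ T], intro allI impI)
    fix t assume t: "T \<le> t"
    have "\<forall>s\<in>{T..t}. fst (\<Phi> s z) \<in> Up" using up by simp
    then show "E z T = E z t" using E_const[OF z T t] by simp
  qed
qed

lemma E0: "E z 0 = k z"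
  by (simp add: E_def sint_def flow0)

lemma E_lim_Up:
  assumes "snd z \<noteq> 0" "fst z \<in> Up"
  shows "(E z \<longlongrightarrow> k z) at_top"
proof -
  have "\<forall>s\<ge>0. fst (\<Phi> s z) \<in> Up" using Up_inv assms(2) by blast
  then show ?thesis using E_lim_after[OF assms(1), of 0] by (simp add: E0)
qed

end

lemma reach:
  fixes u V :: "real \<Rightarrow> real"
  assumes der: "\<forall>t. (u has_real_derivative V (u t)) (at t)"
    and Vc: "continuous_on UNIV V"
    and nz: "\<forall>t\<ge>0. V (u t) \<noteq> 0"
    and pos: "\<forall>w\<in>{u 0..y}. V w > 0"
    and y: "u 0 < y" and b: "y < b" "V b = 0"
  shows "\<exists>T\<ge>0. u T = y \<and> (\<forall>s\<in>{0..T}. u s \<in> {u 0..y}) \<and> (\<forall>s\<ge>T. u s \<in> {y..<b})"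
proof -
  have uc: "continuous_on S u" for S
    using der DERIV_isCont continuous_at_imp_continuous_on by blast
  have Vuc: "continuous_on S (\<lambda>t. V (u t))" for S
    using continuous_on_compose2[OF Vc uc] by auto
  have Vpos: "V (u t) > 0" if t: "t \<ge> 0" for t
  proof (rule ccontr)
    assume "\<not> V (u t) > 0"
    then have "V (u t) \<le> 0" by simp
    moreover have "V (u 0) > 0" using pos y by auto
    ultimately obtain s where "0 \<le> s" "s \<le> t" "V (u s) = 0"
      using IVT2'[of "\<lambda>t. V (u t)" t 0 0, OF _ _ t Vuc] by auto
    then show False using nz by auto
  qed
  have mono: "u s \<le> u t" if "0 \<le> s" "s \<le> t" for s t
    using DERIV_nonneg_imp_nondecreasing[of s t u] der Vpos that
    by (metis less_imp_le order_trans)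
  have ltb: "u t < b" if t: "t \<ge> 0" for t
  proof (rule ccontr)
    assume "\<not> u t < b"
    then have "b \<le> u t" by simp
    moreover have "u 0 \<le> b" using y b by simp
    ultimately obtain s where "0 \<le> s" "s \<le> t" "u s = b"
      using IVT'[of u 0 b t, OF _ _ t uc] by auto
    then show False using nz b by auto
  qed
  obtain w0 where w0: "w0 \<in> {u 0..y}" "\<forall>w\<in>{u 0..y}. V w0 \<le> V w"
    using continuous_attains_inf[of "{u 0..y}" V] y continuous_on_subset[OF Vc] by auto
  define \<mu> where "\<mu> = V w0"
  have mu: "\<mu> > 0" using pos w0 \<mu>_def by auto
  have ex: "\<exists>t1\<ge>0. y \<le> u t1"
  proof (rule ccontr)
    assume "\<not> (\<exists>t1\<ge>0. y \<le> u t1)"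
    then have lt: "\<forall>t\<ge>0. u t < y" by force
    define t1 where "t1 = (y - u 0) / \<mu> + 1"
    have t1: "t1 \<ge> 0" using mu y t1_def by simp
    have "u 0 - \<mu> * 0 \<le> u t1 - \<mu> * t1"
    proof (rule DERIV_nonneg_imp_nondecreasing[OF t1])
      fix s assume s: "0 \<le> s" "s \<le> t1"
      have "u s \<in> {u 0..y}" using mono[of 0 s] lt s by auto
      then have "V (u s) - \<mu> \<ge> 0" using w0 \<mu>_def by auto
      moreover have "((\<lambda>t. u t - \<mu> * t) has_real_derivative V (u s) - \<mu>) (at s)"
        using DERIV_diff[OF der[rule_format, of s] DERIV_cmult_Id[of \<mu> s]] by simp
      ultimately show "\<exists>d. ((\<lambda>t. u t - \<mu> * t) has_real_derivative d) (at s) \<and> 0 \<le> d" by blast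
    qed
    then have "u t1 \<ge> u 0 + \<mu> * t1" by simp
    moreover have "\<mu> * t1 = (y - u 0) + \<mu>" using mu by (simp add: t1_def field_simps)
    ultimately have "u t1 \<ge> y" using mu by simp
    then show False using lt t1 by force
  qed
  then obtain t1 where t1: "t1 \<ge> 0" "y \<le> u t1" by blast
  obtain T where T: "0 \<le> T" "T \<le> t1" "u T = y"
    using IVT'[of u 0 y t1, OF _ t1(2) t1(1) uc] y by auto
  have A: "\<forall>s\<in>{0..T}. u s \<in> {u 0..y}"
    using mono T by (metis atLeastAtMost_iff order.refl)
  have B: "\<forall>s\<ge>T. u s \<in> {y..<b}"
    using mono T ltb by (metis atLeastLessThan_iff order_trans)
  show ?thesis using T A B by blast
qed

lemma reach_neg:
  fixes u V :: "real \<Rightarrow> real"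
  assumes der: "\<forall>t. (u has_real_derivative V (u t)) (at t)"
    and Vc: "continuous_on UNIV V"
    and nz: "\<forall>t\<ge>0. V (u t) \<noteq> 0"
    and neg: "\<forall>w\<in>{y..u 0}. V w < 0"
    and y: "y < u 0" and a: "a < y" "V a = 0"
  shows "\<exists>T\<ge>0. u T = y \<and> (\<forall>s\<in>{0..T}. u s \<in> {y..u 0}) \<and> (\<forall>s\<ge>T. u s \<in> {a<..y})"
proof -
  let ?u = "\<lambda>t. - u t" and ?V = "\<lambda>w. - V (- w)"
  have der': "\<forall>t. (?u has_real_derivative ?V (?u t)) (at t)"
    using der by (auto intro!: derivative_eq_intros)
  have Vc': "continuous_on UNIV ?V"
    by (intro continuous_intros continuous_on_compose2[OF Vc]) auto
  have pos': "\<forall>w\<in>{?u 0..-y}. ?V w > 0"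
  proof
    fix w assume "w \<in> {?u 0..-y}"
    then have "- w \<in> {y..u 0}" by auto
    then show "?V w > 0" using neg by auto
  qed
  obtain T where T: "T \<ge> 0" "?u T = -y" "\<forall>s\<in>{0..T}. ?u s \<in> {?u 0..-y}" "\<forall>s\<ge>T. ?u s \<in> {-y..<-a}"
    using reach[of ?u ?V "-y" "-a", OF der' Vc'] nz pos' y a by auto
  have "\<forall>s\<in>{0..T}. u s \<in> {y..u 0}"
  proof
    fix s assume "s \<in> {0..T}"
    then have "- u s \<in> {- u 0..-y}" using T(3) by blast
    then show "u s \<in> {y..u 0}" by auto
  qed
  moreover have "\<forall>s\<ge>T. u s \<in> {a<..y}"
  proof (intro allI impI)
    fix s assume "s \<ge> T"
    then have "- u s \<in> {-y..<-a}" using T(4) by blast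
    then show "u s \<in> {a<..y}" by auto
  qed
  ultimately show ?thesis using T by auto
qed

context half begin

lemma X_per_nat: "X (x + 2 * pi * real n) = X x"
proof (induction n arbitrary: x)
  case 0 then show ?case by simp
next
  case (Suc n)
  have "X (x + 2 * pi * real (Suc n)) = X ((x + 2 * pi * real n) + 2 * pi)"
    by (simp add: algebra_simps)
  also have "\<dots> = X (x + 2 * pi * real n)" using X_per by blast
  finally show ?case using Suc by simp
qed

lemma X_per_int: "X (x + 2 * pi * real_of_int n) = X x"
proof (cases "n \<ge> 0")
  case True
  have "real (nat n) = real_of_int n" using True by (rule of_nat_nat)
  then show ?thesis using X_per_nat[of x "nat n"] by (simp only:)
next
  case False
  define N where "N = nat (-n)"
  have "real N = real_of_int (-n)" unfolding N_def using False by (intro of_nat_nat) simp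
  then have n: "real_of_int n = - real N" by (simp only: of_int_minus)
  have eq: "x + 2 * pi * real_of_int n = x - 2 * pi * real N" unfolding n by (simp only: mult_minus_right diff_conv_add_uminus)
  have "X ((x - 2 * pi * real N) + 2 * pi * real N) = X (x - 2 * pi * real N)"
    by (rule X_per_nat)
  then have "X x = X (x - 2 * pi * real N)" by (simp only: diff_add_cancel)
  then show ?thesis unfolding eq by (rule sym)
qed

lemma zero_in_right: "\<exists>y\<in>{x0..x0 + 2*pi}. X y = 0"
proof -
  obtain x1 where x1: "X x1 = 0" using X_zero by blast
  define r where "r = (x0 - x1) / (2*pi)"
  define n where "n = \<lceil>r\<rceil>"
  have rn: "r \<le> n" "n < r + 1"
    using ceiling_correct[of r] unfolding n_def by linarith+
  have xr: "x0 - x1 = 2*pi*r" unfolding r_def by simp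
  have "2*pi*r \<le> 2*pi*n" using rn(1) pi_gt_zero by (intro mult_left_mono) auto
  moreover have "2*pi*n < 2*pi*(r+1)" using rn(2) pi_gt_zero by (intro mult_strict_left_mono) auto
  ultimately have "x1 + 2*pi*n \<in> {x0..x0+2*pi}" using xr by (simp add: algebra_simps)
  moreover have "X (x1 + 2*pi*n) = 0" using X_per_int[of x1 n] x1 by simp
  ultimately show ?thesis by blast
qed

lemma zero_in_left: "\<exists>y\<in>{x0 - 2*pi..x0}. X y = 0"
proof -
  obtain x1 where x1: "X x1 = 0" using X_zero by blast
  define r where "r = (x0 - x1) / (2*pi)"
  define n where "n = \<lfloor>r\<rfloor>"
  have rn: "n \<le> r" "r < n + 1"
    using floor_correct[of r] unfolding n_def by linarith+
  have xr: "x0 - x1 = 2*pi*r" unfolding r_def by simp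
  have "2*pi*n \<le> 2*pi*r" using rn(1) pi_gt_zero by (intro mult_left_mono) auto
  moreover have "2*pi*r < 2*pi*(n+1)" using rn(2) pi_gt_zero by (intro mult_strict_left_mono) auto
  ultimately have "x1 + 2*pi*n \<in> {x0 - 2*pi..x0}" using xr by (simp add: algebra_simps)
  moreover have "X (x1 + 2*pi*n) = 0" using X_per_int[of x1 n] x1 by simp
  ultimately show ?thesis by blast
qed

lemma closed_zeros: "closed {y \<in> S. X y = 0}" if "closed S" for S
  using continuous_closed_preimage_constant[OF X_cont that] .

lemma first_zero_right: "\<exists>b\<ge>x0. X b = 0 \<and> (\<forall>y. x0 \<le> y \<and> y < b \<longrightarrow> X y \<noteq> 0)"
proof -
  let ?Z = "{y \<in> {x0..x0 + 2*pi}. X y = 0}"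
  have "compact ?Z"
  proof -
    have "bounded ?Z" by (rule bounded_subset[of "{x0..x0 + 2*pi}"]) auto
    then show ?thesis using closed_zeros[OF closed_atLeastAtMost, of "x0"] compact_eq_bounded_closed by blast
  qed
  moreover have "?Z \<noteq> {}" using zero_in_right[of x0] by auto
  ultimately obtain b where b: "b \<in> ?Z" "\<forall>y\<in>?Z. b \<le> y"
    using compact_attains_inf by blast
  show ?thesis
  proof (rule exI[of _ b], intro conjI allI impI)
    show "x0 \<le> b" "X b = 0" using b by auto
    fix y assume y: "x0 \<le> y \<and> y < b"
    show "X y \<noteq> 0"
    proof
      assume "X y = 0"
      then have "y \<in> ?Z" using y b by auto
      then have "b \<le> y" using b(2) by blast
      then show False using y by linarith
    qed
  qed
qed

lemma first_zero_left: "\<exists>a\<le>x0. X a = 0 \<and> (\<forall>y. a < y \<and> y \<le> x0 \<longrightarrow> X y \<noteq> 0)"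
proof -
  let ?Z = "{y \<in> {x0 - 2*pi..x0}. X y = 0}"
  have "compact ?Z"
  proof -
    have "bounded ?Z" by (rule bounded_subset[of "{x0 - 2*pi..x0}"]) auto
    then show ?thesis using closed_zeros[OF closed_atLeastAtMost, of "x0 - 2*pi"] compact_eq_bounded_closed by blast
  qed
  moreover have "?Z \<noteq> {}" using zero_in_left[of x0] by auto
  ultimately obtain a where a: "a \<in> ?Z" "\<forall>y\<in>?Z. y \<le> a"
    using compact_attains_sup by blast
  show ?thesis
  proof (rule exI[of _ a], intro conjI allI impI)
    show "a \<le> x0" "X a = 0" using a by auto
    fix y assume y: "a < y \<and> y \<le> x0"
    show "X y \<noteq> 0"
    proof
      assume "X y = 0"
      then have "y \<in> ?Z" using y a by auto
      then have "y \<le> a" using a(2) by blast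
      then show False using y by linarith
    qed
  qed
qed

end

context half begin

lemma m_hom': "c > 0 \<Longrightarrow> \<eta> \<noteq> 0 \<Longrightarrow> m (w, c * \<eta>) = c * m (w, \<eta>)"
  using m_hom unfolding pos_homog_def by (simp add: powr_one)

lemma k_hom': "c > 0 \<Longrightarrow> \<eta> \<noteq> 0 \<Longrightarrow> k (w, c * \<eta>) = c * k (w, \<eta>)"
  using k_hom unfolding pos_homog_def by (simp add: powr_one)

lemma scale_sig:
  assumes \<sigma>: "\<sigma> = 1 \<or> \<sigma> = -1" "\<sigma> * \<xi> > 0" and Xw: "X w * X x > 0"
  shows "\<xi> * X x / X w = (\<sigma> * \<xi> * X x / X w) * \<sigma>" "\<sigma> * \<xi> * X x / X w > 0"
proof -
  show "\<xi> * X x / X w = (\<sigma> * \<xi> * X x / X w) * \<sigma>" using \<sigma>(1) by auto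
  have "X x / X w > 0" using Xw by (metis divide_pos_pos mult_pos_pos zero_less_mult_iff
        divide_neg_neg mult_neg_neg)
  then show "\<sigma> * \<xi> * X x / X w > 0" using \<sigma>(2)
    by (metis mult_pos_pos times_divide_eq_right)
qed

lemma m_sig:
  assumes \<sigma>: "\<sigma> = 1 \<or> \<sigma> = -1" "\<sigma> * \<xi> > 0" and Xw: "X w * X x > 0"
  shows "m (w, \<xi> * X x / X w) = \<sigma> * \<xi> * X x * (m (w, \<sigma>) / (X w * X w)) * X w"
proof -
  have "m (w, \<xi> * X x / X w) = m (w, (\<sigma> * \<xi> * X x / X w) * \<sigma>)"
    by (subst scale_sig(1)[OF assms]) (rule refl)
  also have "\<dots> = (\<sigma> * \<xi> * X x / X w) * m (w, \<sigma>)"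
    using m_hom'[OF scale_sig(2)[OF assms], of \<sigma> w] \<sigma>(1) by fastforce
  also have "\<dots> = \<sigma> * \<xi> * X x * (m (w, \<sigma>) / (X w * X w)) * X w"
    using Xw by (auto simp: field_simps)
  finally show ?thesis .
qed

lemma k_sig:
  assumes \<sigma>: "\<sigma> = 1 \<or> \<sigma> = -1" "\<sigma> * \<xi> > 0" and Xw: "X w * X x > 0"
  shows "k (w, \<xi> * X x / X w) = \<sigma> * \<xi> * X x * (k (w, \<sigma>) / X w)"
proof -
  have "k (w, \<xi> * X x / X w) = k (w, (\<sigma> * \<xi> * X x / X w) * \<sigma>)"
    by (subst scale_sig(1)[OF assms]) (rule refl)
  also have "\<dots> = (\<sigma> * \<xi> * X x / X w) * k (w, \<sigma>)"
    using k_hom'[OF scale_sig(2)[OF assms], of \<sigma> w] \<sigma>(1) by fastforce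
  finally show ?thesis by simp
qed

lemma piece_value:
  assumes z: "z = (x, \<xi>)" "\<xi> \<noteq> 0" and \<sigma>: "\<sigma> = 1 \<or> \<sigma> = -1" "\<sigma> * \<xi> > 0"
    and T: "T \<ge> 0" "fst (\<Phi> T z) = y" and inI: "\<forall>s\<in>{0..T}. fst (\<Phi> s z) \<in> {lo..hi}"
    and after: "\<forall>s\<ge>T. fst (\<Phi> s z) \<in> Up"
    and x: "x \<in> {lo..hi}" and sg: "\<forall>w\<in>{lo..hi}. X w * X x > 0"
    and P: "\<forall>w\<in>{lo..hi}. (P has_real_derivative m (w, \<sigma>) / (X w * X w)) (at w within {lo..hi})"
  shows "(E z \<longlongrightarrow> \<sigma> * \<xi> * X x * (k (y, \<sigma>) / X y - (P y - P x))) at_top"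
proof -
  have zs: "snd z \<noteq> 0" using z by simp
  have lim: "(E z \<longlongrightarrow> E z T) at_top" by (rule E_lim_after[OF zs T(1) after])
  have yin: "y \<in> {lo..hi}" using inI T by auto
  have xs: "\<Phi> s z = (fst (\<Phi> s z), \<xi> * X x / X (fst (\<Phi> s z)))" if "s \<in> {0..T}" for s
  proof -
    have "fst (\<Phi> s z) \<in> {lo..hi}" using inI that by blast
    then have nz: "X (fst (\<Phi> s z)) \<noteq> 0" using sg by (metis mult_eq_0_iff less_irrefl)
    have "snd (\<Phi> s z) * X (fst (\<Phi> s z)) = \<xi> * X x" using conserv[of s z] z by simp
    then have "snd (\<Phi> s z) = \<xi> * X x / X (fst (\<Phi> s z))" using nz by (simp add: field_simps)
    then show ?thesis by (metis prod.collapse)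
  qed
  let ?g = "\<lambda>s. m (\<Phi> s z)"
  let ?f = "\<lambda>w. m (w, \<sigma>) / (X w * X w)"
  let ?G = "\<lambda>w. \<sigma> * \<xi> * X x * P w"
  have "(?g has_integral (?G (fst (\<Phi> T z)) - ?G (fst (\<Phi> 0 z)))) {0..T}"
  proof (rule fundamental_theorem_of_calculus[OF T(1)])
    fix s assume s: "s \<in> {0..T}"
    let ?x = "fst (\<Phi> s z)"
    have xin: "?x \<in> {lo..hi}" using inI s by blast
    have dx: "((\<lambda>s. fst (\<Phi> s z)) has_vector_derivative X ?x) (at s within {0..T})"
      using flow_x[of z s] by (simp add: has_real_derivative_iff_has_vector_derivative[symmetric]
          has_field_derivative_at_within)
    have "(?G has_real_derivative \<sigma> * \<xi> * X x * ?f ?x) (at ?x within {lo..hi})"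
      by (rule DERIV_cmult[OF P[rule_format, OF xin]])
    moreover have sub: "(\<lambda>s. fst (\<Phi> s z)) ` {0..T} \<subseteq> {lo..hi}" using inI by blast
    ultimately have "(?G has_real_derivative \<sigma> * \<xi> * X x * ?f ?x) (at ?x within (\<lambda>s. fst (\<Phi> s z)) ` {0..T})"
      by (rule has_field_derivative_subset)
    then have "(?G has_vector_derivative \<sigma> * \<xi> * X x * ?f ?x) (at ?x within (\<lambda>s. fst (\<Phi> s z)) ` {0..T})"
      by (simp only: has_real_derivative_iff_has_vector_derivative)
    from vector_diff_chain_within[OF dx this]
    have "((\<lambda>s. ?G (fst (\<Phi> s z))) has_vector_derivative X ?x * (\<sigma> * \<xi> * X x * ?f ?x)) (at s within {0..T})"
      by (simp add: o_def)
    moreover have "X ?x * (\<sigma> * \<xi> * X x * ?f ?x) = ?g s"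
    proof -
      have "?g s = m (?x, \<xi> * X x / X ?x)" using xs[OF s] by (metis (no_types, lifting))
      also have "\<dots> = \<sigma> * \<xi> * X x * ?f ?x * X ?x"
        by (rule m_sig[OF \<sigma>]) (use sg xin in blast)
      finally show ?thesis by simp
    qed
    ultimately show "((\<lambda>s. ?G (fst (\<Phi> s z))) has_vector_derivative ?g s) (at s within {0..T})"
      by simp
  qed
  then have int: "integral {0..T} ?g = \<sigma> * \<xi> * X x * (P y - P x)"
    using T z by (simp add: flow0 algebra_simps integral_unique)
  have "k (\<Phi> T z) = k (y, \<xi> * X x / X y)" using xs[of T] T by simp
  also have "\<dots> = \<sigma> * \<xi> * X x * (k (y, \<sigma>) / X y)"
    by (rule k_sig[OF \<sigma>]) (use sg yin in blast)
  finally have "E z T = \<sigma> * \<xi> * X x * (k (y, \<sigma>) / X y - (P y - P x))"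
    using int T by (simp add: E_def sint_def algebra_simps)
  then show ?thesis using lim by simp
qed

end

context half begin

lemma m_slice_Cn:
  assumes "\<sigma> \<noteq> 0"
  shows "C_n_on n S (\<lambda>w. m (w, \<sigma>))"
proof -
  have "C_n_on n {z. snd z \<noteq> 0} m" using m_smooth smooth_on_def by blast
  from C_n_slice[OF this, of \<sigma>] have "C_n_on n {y. (y, \<sigma>) \<in> {z. snd z \<noteq> 0}} (\<lambda>y. m (y, \<sigma>))" .
  moreover have "{y. (y, \<sigma>) \<in> {z. snd z \<noteq> 0}} = UNIV" using assms by auto
  ultimately show ?thesis using C_n_mono by (metis subset_UNIV)
qed

lemma piece_core:
  assumes lohi: "lo < hi" and sg: "\<forall>w\<in>{lo..hi}. \<forall>w'\<in>{lo..hi}. X w * X w' > 0"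
    and y: "y = lo \<or> y = hi"
    and reach: "\<forall>x\<in>{lo<..<hi}. \<forall>\<xi>. \<xi> \<noteq> 0 \<longrightarrow> (\<exists>T\<ge>0. fst (\<Phi> T (x, \<xi>)) = y \<and>
        (\<forall>s\<in>{0..T}. fst (\<Phi> s (x, \<xi>)) \<in> {lo..hi}) \<and> (\<forall>s\<ge>T. fst (\<Phi> s (x, \<xi>)) \<in> Up))"
    and \<sigma>: "\<sigma> = 1 \<or> \<sigma> = -1"
  shows "\<exists>b. (\<forall>n. C_n_on n {lo<..<hi} b)
     \<and> (\<forall>x\<in>{lo<..<hi}. \<forall>\<xi>. \<sigma> * \<xi> > 0 \<longrightarrow> (E (x, \<xi>) \<longlongrightarrow> \<xi> * b x) at_top)
     \<and> (\<forall>x\<in>{lo<..<hi}. \<forall>\<xi>. \<sigma> * \<xi> > 0 \<longrightarrow> X x * (\<xi> * deriv b x) - \<xi> * deriv X x * b x = m (x, \<xi>))"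
proof -
  have sn: "\<sigma> \<noteq> 0" using \<sigma> by auto
  have Xnz: "X w \<noteq> 0" if "w \<in> {lo..hi}" for w
    using sg that by (metis less_irrefl mult_zero_left)
  define f where "f w = m (w, \<sigma>) * inverse (X w) * inverse (X w)" for w
  have f_eq: "f w = m (w, \<sigma>) / (X w * X w)" for w
    unfolding f_def by (simp add: divide_inverse)
  have fc: "continuous_on {lo..hi} f"
  proof -
    have "continuous_on {lo..hi} (\<lambda>w. m (w, \<sigma>))"
      using m_slice_Cn[OF sn, of 0] by simp
    moreover have "continuous_on {lo..hi} (\<lambda>w. inverse (X w))"
      using X_cont Xnz by (intro continuous_on_inverse) auto
    ultimately show ?thesis unfolding f_def by (intro continuous_on_mult)
  qed
  define P where "P w = integral {lo..w} f" for w
  have Pd: "(P has_real_derivative f w) (at w within {lo..hi})" if "w \<in> {lo..hi}" for w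
    using integral_has_vector_derivative[OF fc that] unfolding P_def
    by (simp add: has_real_derivative_iff_has_vector_derivative)
  have Pd': "(P has_real_derivative f w) (at w)" if "w \<in> {lo<..<hi}" for w
    using Pd[of w] that at_within_Icc_at[of lo w hi] by auto
  define K where "K = k (y, \<sigma>) / X y"
  define b where "b x = \<sigma> * X x * (K - (P y - P x))" for x
  have yin: "y \<in> {lo..hi}" using y lohi by auto
  have fCn: "C_n_on n {lo<..<hi} f" for n
  proof -
    have "C_n_on n {lo<..<hi} (\<lambda>w. m (w, \<sigma>))" by (rule m_slice_Cn[OF sn])
    moreover have "C_n_on n {lo<..<hi} (\<lambda>w. inverse (X w))"
      using C_n_inverse[OF C_n_mono[OF X_Cn subset_UNIV]] Xnz by auto
    ultimately show ?thesis unfolding f_def by (intro C_n_mult)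
  qed
  have PCn: "C_n_on n {lo<..<hi} P" for n
  proof -
    have "C_n_on (Suc n) {lo<..<hi} P" using C_n_antideriv[of "{lo<..<hi}" P f n] Pd' fCn by blast
    then show ?thesis by (rule C_n_Suc_imp)
  qed
  have bCn: "C_n_on n {lo<..<hi} b" for n
    unfolding b_def
    by (intro C_n_mult C_n_const C_n_diff PCn C_n_mono[OF X_Cn subset_UNIV])
  have lim: "(E (x, \<xi>) \<longlongrightarrow> \<xi> * b x) at_top" if x: "x \<in> {lo<..<hi}" and s: "\<sigma> * \<xi> > 0" for x \<xi>
  proof -
    have xn: "\<xi> \<noteq> 0" using s by auto
    obtain T where T: "T \<ge> 0" "fst (\<Phi> T (x, \<xi>)) = y" "\<forall>s\<in>{0..T}. fst (\<Phi> s (x, \<xi>)) \<in> {lo..hi}"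
      "\<forall>s\<ge>T. fst (\<Phi> s (x, \<xi>)) \<in> Up"
      using reach x xn by blast
    have xin: "x \<in> {lo..hi}" using x by auto
    have sgx: "\<forall>w\<in>{lo..hi}. X w * X x > 0" using sg xin by blast
    have Pw: "\<forall>w\<in>{lo..hi}. (P has_real_derivative m (w, \<sigma>) / (X w * X w)) (at w within {lo..hi})"
      using Pd f_eq by simp
    have "(E (x, \<xi>) \<longlongrightarrow> \<sigma> * \<xi> * X x * (k (y, \<sigma>) / X y - (P y - P x))) at_top"
      by (rule piece_value[OF refl xn \<sigma> s T(1,2,3,4) xin sgx Pw])
    moreover have "\<sigma> * \<xi> * X x * (k (y, \<sigma>) / X y - (P y - P x)) = \<xi> * b x"
      unfolding b_def K_def by simp
    ultimately show ?thesis by simp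
  qed
  have pois: "X x * (\<xi> * deriv b x) - \<xi> * deriv X x * b x = m (x, \<xi>)"
    if x: "x \<in> {lo<..<hi}" and s: "\<sigma> * \<xi> > 0" for x \<xi>
  proof -
    have bd: "(b has_real_derivative \<sigma> * (deriv X x * (K - (P y - P x)) + X x * f x)) (at x)"
    proof -
      have "((\<lambda>x. \<sigma> * X x * (K - (P y - P x))) has_real_derivative
          \<sigma> * (deriv X x * (K - (P y - P x)) + X x * f x)) (at x)"
        by (rule DERIV_cong[OF DERIV_mult[OF DERIV_cmult[OF X_der[of x], of \<sigma>]
              DERIV_diff[OF DERIV_const DERIV_diff[OF DERIV_const Pd'[OF x]]]]])
          (simp add: algebra_simps)
      then show ?thesis unfolding b_def .
    qed
    have db: "deriv b x = \<sigma> * (deriv X x * (K - (P y - P x)) + X x * f x)"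
      by (rule DERIV_imp_deriv[OF bd])
    have bx: "b x = \<sigma> * X x * (K - (P y - P x))" by (simp add: b_def)
    have "X x * (\<xi> * deriv b x) - \<xi> * deriv X x * b x = \<sigma> * \<xi> * (X x * X x * f x)"
      unfolding db bx by (simp add: algebra_simps)
    also have "X x * X x * f x = m (x, \<sigma>)"
      using Xnz[of x] x unfolding f_eq by auto
    also have "\<sigma> * \<xi> * m (x, \<sigma>) = m (x, \<xi>)"
    proof -
      have "m (x, (\<sigma> * \<xi>) * \<sigma>) = (\<sigma> * \<xi>) * m (x, \<sigma>)" by (rule m_hom'[OF s sn])
      moreover have "(\<sigma> * \<xi>) * \<sigma> = \<xi>" using \<sigma> by auto
      ultimately show ?thesis by simp
    qed
    finally show ?thesis .
  qed
  show ?thesis using bCn lim pois by blast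
qed

end

context half begin

lemma ball_in_Up:
  assumes "w \<in> Kplus X"
  obtains \<epsilon> where "\<epsilon> > 0" "\<forall>v. \<bar>v - w\<bar> < \<epsilon> \<longrightarrow> v \<in> Up"
proof -
  have "w \<in> Up" using assms Up_nbhd by blast
  then obtain \<epsilon> where e: "\<epsilon> > 0" "ball w \<epsilon> \<subseteq> Up" using Up_open openE by blast
  have "\<forall>v. \<bar>v - w\<bar> < \<epsilon> \<longrightarrow> v \<in> Up"
  proof (intro allI impI)
    fix v assume "\<bar>v - w\<bar> < \<epsilon>"
    then have "v \<in> ball w \<epsilon>" by (simp add: dist_real_def abs_minus_commute)
    then show "v \<in> Up" using e by blast
  qed
  then show ?thesis using that e by blast
qed

lemma piece:
  assumes x0: "x0 \<notin> Up" "x0 \<notin> Kminus X" and \<sigma>: "\<sigma> = 1 \<or> \<sigma> = -1"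
  shows "\<exists>lo hi b. lo < x0 \<and> x0 < hi \<and> (\<forall>w\<in>{lo<..<hi}. X w \<noteq> 0) \<and> (\<forall>n. C_n_on n {lo<..<hi} b)
     \<and> (\<forall>x\<in>{lo<..<hi}. \<forall>\<xi>. \<sigma> * \<xi> > 0 \<longrightarrow> (E (x, \<xi>) \<longlongrightarrow> \<xi> * b x) at_top)
     \<and> (\<forall>x\<in>{lo<..<hi}. \<forall>\<xi>. \<sigma> * \<xi> > 0 \<longrightarrow> X x * (\<xi> * deriv b x) - \<xi> * deriv X x * b x = m (x, \<xi>))"
proof -
  have Xx0: "X x0 \<noteq> 0"
  proof
    assume z: "X x0 = 0"
    then have "deriv X x0 \<noteq> 0" using X_nondeg by blast
    then have "deriv X x0 < 0 \<or> deriv X x0 > 0" by linarith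
    then show False
    proof
      assume "deriv X x0 < 0"
      then have "x0 \<in> Kplus X" using z by (simp add: Kplus_def)
      then show False using x0 Up_nbhd by blast
    next
      assume "deriv X x0 > 0"
      then have "x0 \<in> Kminus X" using z by (simp add: Kminus_def)
      then show False using x0 by blast
    qed
  qed
  have Xlim: "X \<midarrow>x0\<rightarrow> X x0" using X_isCont isCont_def by blast
  have "X x0 > 0 \<or> X x0 < 0" using Xx0 by linarith
  then show ?thesis
  proof
    assume pos: "X x0 > 0"
    obtain b0 where b0: "b0 \<ge> x0" "X b0 = 0" "\<forall>y. x0 \<le> y \<and> y < b0 \<longrightarrow> X y \<noteq> 0"
      using first_zero_right[of x0] by blast
    have xb: "x0 < b0" using b0 Xx0 by (metis order_le_less)
    have Xpos: "X w > 0" if w: "x0 \<le> w" "w < b0" for w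
    proof (rule ccontr)
      assume "\<not> X w > 0"
      then have "X w \<le> 0" by simp
      then obtain c where c: "x0 \<le> c" "c \<le> w" "X c = 0"
        using IVT2'[of X w 0 x0, OF _ _ w(1) X_cont] pos by auto
      then show False using b0(3) w by auto
    qed
    have "deriv X b0 \<le> 0"
    proof (rule ccontr)
      assume "\<not> deriv X b0 \<le> 0"
      then obtain d where d: "d > 0" "\<forall>h>0. h < d \<longrightarrow> X (b0 - h) < X b0"
        using DERIV_pos_inc_left[OF X_der[of b0]] by auto
      define h where "h = min d (b0 - x0) / 2"
      have h: "h > 0" "h < d" "h \<le> b0 - x0" using d xb unfolding h_def by auto
      then have "X (b0 - h) < 0" using d b0 by auto
      moreover have "X (b0 - h) > 0" using Xpos[of "b0 - h"] h by auto
      ultimately show False by simp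
    qed
    then have "deriv X b0 < 0" using X_nondeg b0 by force
    then have "b0 \<in> Kplus X" using b0 by (simp add: Kplus_def)
    then obtain \<epsilon> where e: "\<epsilon> > 0" "\<forall>v. \<bar>v - b0\<bar> < \<epsilon> \<longrightarrow> v \<in> Up" by (rule ball_in_Up)
    define y where "y = b0 - \<epsilon> / 2"
    have xy: "x0 < y"
    proof (rule ccontr)
      assume "\<not> x0 < y"
      then have "\<bar>x0 - b0\<bar> < \<epsilon>" using xb e unfolding y_def by auto
      then show False using e x0 by blast
    qed
    have yb: "y < b0" using e unfolding y_def by simp
    obtain d where d: "d > 0" "\<forall>w. w \<noteq> x0 \<and> \<bar>x0 - w\<bar> < d \<longrightarrow> 0 < X w"
      using LIM_fun_gt_zero[OF Xlim pos] by blast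
    define lo where "lo = x0 - d / 2"
    have lox: "lo < x0" using d unfolding lo_def by simp
    have Xp: "X w > 0" if "w \<in> {lo..y}" for w
    proof (cases "w < x0")
      case True
      then show ?thesis using d that unfolding lo_def by auto
    next
      case False
      then show ?thesis using Xpos[of w] that yb by auto
    qed
    have sg: "\<forall>w\<in>{lo..y}. \<forall>w'\<in>{lo..y}. X w * X w' > 0"
      using Xp by (simp add: mult_pos_pos)
    have reachH: "\<forall>x\<in>{lo<..<y}. \<forall>\<xi>. \<xi> \<noteq> 0 \<longrightarrow> (\<exists>T\<ge>0. fst (\<Phi> T (x, \<xi>)) = y \<and>
        (\<forall>s\<in>{0..T}. fst (\<Phi> s (x, \<xi>)) \<in> {lo..y}) \<and> (\<forall>s\<ge>T. fst (\<Phi> s (x, \<xi>)) \<in> Up))"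
    proof (intro ballI allI impI)
      fix x \<xi> :: real assume x: "x \<in> {lo<..<y}" and xn: "\<xi> \<noteq> 0"
      let ?u = "\<lambda>t. fst (\<Phi> t (x, \<xi>))"
      have u0: "?u 0 = x" by (simp add: flow0)
      have Xx: "X x \<noteq> 0" using Xp[of x] x by auto
      have nz: "\<forall>t\<ge>0. X (?u t) \<noteq> 0" using X_flow_nz[of "(x, \<xi>)"] xn Xx by simp
      have posw: "\<forall>w\<in>{?u 0..y}. X w > 0" using Xp x u0 by auto
      obtain T where T: "T \<ge> 0" "?u T = y" "\<forall>s\<in>{0..T}. ?u s \<in> {?u 0..y}" "\<forall>s\<ge>T. ?u s \<in> {y..<b0}"
        using reach[of ?u X y b0] flow_x X_cont nz posw x u0 yb b0(2) by auto
      have "\<forall>s\<in>{0..T}. ?u s \<in> {lo..y}" using T(3) x u0 by auto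
      moreover have "\<forall>s\<ge>T. ?u s \<in> Up"
      proof (intro allI impI)
        fix s assume "s \<ge> T"
        then have "?u s \<in> {y..<b0}" using T(4) by blast
        then have "\<bar>?u s - b0\<bar> < \<epsilon>" using e unfolding y_def by auto
        then show "?u s \<in> Up" using e by blast
      qed
      ultimately show "\<exists>T\<ge>0. ?u T = y \<and> (\<forall>s\<in>{0..T}. ?u s \<in> {lo..y}) \<and> (\<forall>s\<ge>T. ?u s \<in> Up)"
        using T by blast
    qed
    obtain bb where bb: "\<forall>n. C_n_on n {lo<..<y} bb"
      "\<forall>x\<in>{lo<..<y}. \<forall>\<xi>. \<sigma> * \<xi> > 0 \<longrightarrow> (E (x, \<xi>) \<longlongrightarrow> \<xi> * bb x) at_top"
      "\<forall>x\<in>{lo<..<y}. \<forall>\<xi>. \<sigma> * \<xi> > 0 \<longrightarrow> X x * (\<xi> * deriv bb x) - \<xi> * deriv X x * bb x = m (x, \<xi>)"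
      using piece_core[OF _ sg _ reachH \<sigma>] lox xy by auto
    have "\<forall>w\<in>{lo<..<y}. X w \<noteq> 0"
    proof
      fix w assume "w \<in> {lo<..<y}"
      then have "w \<in> {lo..y}" by simp
      then have "X w > 0" by (rule Xp)
      then show "X w \<noteq> 0" by simp
    qed
    then show ?thesis using bb lox xy by blast
  next
    assume neg: "X x0 < 0"
    obtain a0 where a0: "a0 \<le> x0" "X a0 = 0" "\<forall>y. a0 < y \<and> y \<le> x0 \<longrightarrow> X y \<noteq> 0"
      using first_zero_left[of x0] by blast
    have xa: "a0 < x0" using a0 Xx0 by (metis order_le_less)
    have Xneg: "X w < 0" if w: "a0 < w" "w \<le> x0" for w
    proof (rule ccontr)
      assume "\<not> X w < 0"
      then have "X w \<ge> 0" by simp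
      then obtain c where c: "w \<le> c" "c \<le> x0" "X c = 0"
        using IVT2'[of X x0 0 w, OF _ _ w(2) X_cont] neg by auto
      then show False using a0(3) w by auto
    qed
    have "deriv X a0 \<le> 0"
    proof (rule ccontr)
      assume "\<not> deriv X a0 \<le> 0"
      then obtain d where d: "d > 0" "\<forall>h>0. h < d \<longrightarrow> X a0 < X (a0 + h)"
        using DERIV_pos_inc_right[OF X_der[of a0]] by auto
      define h where "h = min d (x0 - a0) / 2"
      have h: "h > 0" "h < d" "h \<le> x0 - a0" using d xa unfolding h_def by auto
      then have "X (a0 + h) > 0" using d a0 by auto
      moreover have "X (a0 + h) < 0" using Xneg[of "a0 + h"] h by auto
      ultimately show False by simp
    qed
    then have "deriv X a0 < 0" using X_nondeg a0 by force
    then have "a0 \<in> Kplus X" using a0 by (simp add: Kplus_def)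
    then obtain \<epsilon> where e: "\<epsilon> > 0" "\<forall>v. \<bar>v - a0\<bar> < \<epsilon> \<longrightarrow> v \<in> Up" by (rule ball_in_Up)
    define y where "y = a0 + \<epsilon> / 2"
    have xy: "y < x0"
    proof (rule ccontr)
      assume "\<not> y < x0"
      then have "\<bar>x0 - a0\<bar> < \<epsilon>" using xa e unfolding y_def by auto
      then show False using e x0 by blast
    qed
    have ya: "a0 < y" using e unfolding y_def by simp
    obtain d where d: "d > 0" "\<forall>w. w \<noteq> x0 \<and> \<bar>x0 - w\<bar> < d \<longrightarrow> X w < 0"
      using LIM_fun_less_zero[OF Xlim neg] by blast
    define hi where "hi = x0 + d / 2"
    have xhi: "x0 < hi" using d unfolding hi_def by simp
    have Xn: "X w < 0" if "w \<in> {y..hi}" for w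
    proof (cases "w > x0")
      case True
      then show ?thesis using d that unfolding hi_def by auto
    next
      case False
      then show ?thesis using Xneg[of w] that ya by auto
    qed
    have sg: "\<forall>w\<in>{y..hi}. \<forall>w'\<in>{y..hi}. X w * X w' > 0"
      using Xn by (simp add: mult_neg_neg)
    have reachH: "\<forall>x\<in>{y<..<hi}. \<forall>\<xi>. \<xi> \<noteq> 0 \<longrightarrow> (\<exists>T\<ge>0. fst (\<Phi> T (x, \<xi>)) = y \<and>
        (\<forall>s\<in>{0..T}. fst (\<Phi> s (x, \<xi>)) \<in> {y..hi}) \<and> (\<forall>s\<ge>T. fst (\<Phi> s (x, \<xi>)) \<in> Up))"
    proof (intro ballI allI impI)
      fix x \<xi> :: real assume x: "x \<in> {y<..<hi}" and xn: "\<xi> \<noteq> 0"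
      let ?u = "\<lambda>t. fst (\<Phi> t (x, \<xi>))"
      have u0: "?u 0 = x" by (simp add: flow0)
      have Xx: "X x \<noteq> 0" using Xn[of x] x by auto
      have nz: "\<forall>t\<ge>0. X (?u t) \<noteq> 0" using X_flow_nz[of "(x, \<xi>)"] xn Xx by simp
      have negw: "\<forall>w\<in>{y..?u 0}. X w < 0" using Xn x u0 by auto
      obtain T where T: "T \<ge> 0" "?u T = y" "\<forall>s\<in>{0..T}. ?u s \<in> {y..?u 0}" "\<forall>s\<ge>T. ?u s \<in> {a0<..y}"
        using reach_neg[of ?u X y a0] flow_x X_cont nz negw x u0 ya a0(2) by auto
      have "\<forall>s\<in>{0..T}. ?u s \<in> {y..hi}" using T(3) x u0 by auto
      moreover have "\<forall>s\<ge>T. ?u s \<in> Up"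
      proof (intro allI impI)
        fix s assume "s \<ge> T"
        then have "?u s \<in> {a0<..y}" using T(4) by blast
        then have "\<bar>?u s - a0\<bar> < \<epsilon>" using e unfolding y_def by auto
        then show "?u s \<in> Up" using e by blast
      qed
      ultimately show "\<exists>T\<ge>0. ?u T = y \<and> (\<forall>s\<in>{0..T}. ?u s \<in> {y..hi}) \<and> (\<forall>s\<ge>T. ?u s \<in> Up)"
        using T by blast
    qed
    obtain bb where bb: "\<forall>n. C_n_on n {y<..<hi} bb"
      "\<forall>x\<in>{y<..<hi}. \<forall>\<xi>. \<sigma> * \<xi> > 0 \<longrightarrow> (E (x, \<xi>) \<longlongrightarrow> \<xi> * bb x) at_top"
      "\<forall>x\<in>{y<..<hi}. \<forall>\<xi>. \<sigma> * \<xi> > 0 \<longrightarrow> X x * (\<xi> * deriv bb x) - \<xi> * deriv X x * bb x = m (x, \<xi>)"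
      using piece_core[OF _ sg _ reachH \<sigma>] xhi xy by auto
    have "\<forall>w\<in>{y<..<hi}. X w \<noteq> 0"
    proof
      fix w assume "w \<in> {y<..<hi}"
      then have "w \<in> {y..hi}" by simp
      then have "X w < 0" by (rule Xn)
      then show "X w \<noteq> 0" by simp
    qed
    then show ?thesis using bb xhi xy by blast
  qed
qed

end

context half begin

definition ell :: "real \<times> real \<Rightarrow> real" where
  "ell z = Lim at_top (E z)"

lemma ell_eq: "(E z \<longlongrightarrow> v) at_top \<Longrightarrow> ell z = v"
  unfolding ell_def by (rule tendsto_Lim) simp

lemma ell_Up: "x \<in> Up \<Longrightarrow> \<xi> \<noteq> 0 \<Longrightarrow> ell (x, \<xi>) = k (x, \<xi>)"
  using E_lim_Up[of "(x, \<xi>)"] ell_eq by simp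

lemma sig_choice: "\<xi> \<noteq> 0 \<Longrightarrow> \<exists>\<sigma>::real. (\<sigma> = 1 \<or> \<sigma> = -1) \<and> \<sigma> * \<xi> > 0"
proof -
  assume "\<xi> \<noteq> 0"
  then have "\<xi> > 0 \<or> \<xi> < 0" by linarith
  then show ?thesis
  proof
    assume "\<xi> > 0" then show ?thesis by (intro exI[of _ 1]) simp
  next
    assume "\<xi> < 0" then show ?thesis by (intro exI[of _ "-1"]) simp
  qed
qed

lemma b_der:
  assumes "\<forall>n. C_n_on n {lo<..<hi} b" "x \<in> {lo<..<hi}"
  shows "(b has_real_derivative deriv b x) (at x)"
proof -
  obtain D where "\<forall>z\<in>{lo<..<hi}. (b has_derivative D z) (at z)"
    using assms(1)[rule_format, of 1] by auto
  then have "b differentiable (at x)" using assms(2) unfolding differentiable_def by blast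
  then show ?thesis using DERIV_deriv_iff_real_differentiable by blast
qed

lemma Kminus_open: "x \<notin> Kminus X \<Longrightarrow> \<exists>e>0. \<forall>y. \<bar>x - y\<bar> < e \<longrightarrow> y \<notin> Kminus X"
proof -
  assume x: "x \<notin> Kminus X"
  have Xlim: "X \<midarrow>x\<rightarrow> X x" using X_isCont isCont_def by blast
  show ?thesis
  proof (cases "X x = 0")
    case True
    then have "deriv X x < 0" using x X_nondeg unfolding Kminus_def by force
    moreover have "deriv X \<midarrow>x\<rightarrow> deriv X x"
      using Xd_cont[of UNIV] continuous_on_eq_continuous_at[of UNIV "deriv X"] isCont_def by auto
    ultimately obtain r where r: "r > 0" "\<forall>y. y \<noteq> x \<and> \<bar>x - y\<bar> < r \<longrightarrow> deriv X y < 0"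
      using LIM_fun_less_zero by blast
    then show ?thesis using x by (intro exI[of _ r]) (auto simp: Kminus_def)
  next
    case False
    then have "X x > 0 \<or> X x < 0" by linarith
    then show ?thesis
    proof
      assume "X x > 0"
      then obtain r where r: "r > 0" "\<forall>y. y \<noteq> x \<and> \<bar>x - y\<bar> < r \<longrightarrow> X y > 0"
        using LIM_fun_gt_zero[OF Xlim] by blast
      then show ?thesis using x by (intro exI[of _ r]) (auto simp: Kminus_def)
    next
      assume "X x < 0"
      then obtain r where r: "r > 0" "\<forall>y. y \<noteq> x \<and> \<bar>x - y\<bar> < r \<longrightarrow> X y < 0"
        using LIM_fun_less_zero[OF Xlim] by blast
      then show ?thesis using x by (intro exI[of _ r]) (auto simp: Kminus_def)
    qed
  qed
qed

lemma open_nKminus: "open (- Kminus X)"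
  unfolding open_dist
proof (intro ballI)
  fix x assume "x \<in> - Kminus X"
  then obtain e where "e > 0" "\<forall>y. \<bar>x - y\<bar> < e \<longrightarrow> y \<notin> Kminus X" using Kminus_open by blast
  then show "\<exists>e>0. \<forall>x'. dist x' x < e \<longrightarrow> x' \<in> - Kminus X"
    by (intro exI[of _ e]) (auto simp: dist_real_def abs_minus_commute)
qed

lemma open_sig: "open {\<eta>::real. 0 < \<sigma> * \<eta>}"
  by (rule open_Collect_less) (auto intro!: continuous_intros)

end

context half begin

lemma ell_piece:
  assumes x0: "x0 \<notin> Up" "x0 \<notin> Kminus X" and \<sigma>: "\<sigma> = 1 \<or> \<sigma> = -1"
  shows "\<exists>lo hi b. lo < x0 \<and> x0 < hi \<and> (\<forall>w\<in>{lo<..<hi}. X w \<noteq> 0) \<and> (\<forall>n. C_n_on n {lo<..<hi} b)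
     \<and> (\<forall>x\<in>{lo<..<hi}. \<forall>\<xi>. \<sigma> * \<xi> > 0 \<longrightarrow> (E (x, \<xi>) \<longlongrightarrow> \<xi> * b x) at_top)
     \<and> (\<forall>x\<in>{lo<..<hi}. \<forall>\<xi>. \<sigma> * \<xi> > 0 \<longrightarrow> ell (x, \<xi>) = \<xi> * b x)
     \<and> (\<forall>x\<in>{lo<..<hi}. \<forall>\<xi>. \<sigma> * \<xi> > 0 \<longrightarrow> X x * (\<xi> * deriv b x) - \<xi> * deriv X x * b x = m (x, \<xi>))"
proof -
  obtain lo hi b where P: "lo < x0" "x0 < hi" "\<forall>w\<in>{lo<..<hi}. X w \<noteq> 0" "\<forall>n. C_n_on n {lo<..<hi} b"
     "\<forall>x\<in>{lo<..<hi}. \<forall>\<xi>. \<sigma> * \<xi> > 0 \<longrightarrow> (E (x, \<xi>) \<longlongrightarrow> \<xi> * b x) at_top"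
     "\<forall>x\<in>{lo<..<hi}. \<forall>\<xi>. \<sigma> * \<xi> > 0 \<longrightarrow> X x * (\<xi> * deriv b x) - \<xi> * deriv X x * b x = m (x, \<xi>)"
    using piece[OF x0 \<sigma>] by blast
  have "\<forall>x\<in>{lo<..<hi}. \<forall>\<xi>. \<sigma> * \<xi> > 0 \<longrightarrow> ell (x, \<xi>) = \<xi> * b x"
    using P(5) ell_eq by blast
  then show ?thesis using P by blast
qed

lemma ell_lim:
  assumes "snd z \<noteq> 0" "fst z \<notin> Kminus X"
  shows "(E z \<longlongrightarrow> ell z) at_top"
proof (cases "fst z \<in> Up")
  case True
  have "ell z = k z" using E_lim_Up[OF assms(1) True] by (rule ell_eq)
  then show ?thesis using E_lim_Up[OF assms(1) True] by simp
next
  case False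
  obtain x \<xi> where z: "z = (x, \<xi>)" by (cases z) blast
  have xn: "\<xi> \<noteq> 0" "x \<notin> Kminus X" "x \<notin> Up" using assms False z by auto
  obtain \<sigma> :: real where \<sigma>: "\<sigma> = 1 \<or> \<sigma> = -1" "\<sigma> * \<xi> > 0" using sig_choice[OF xn(1)] by blast
  obtain lo hi b where P: "lo < x" "x < hi"
     "\<forall>x\<in>{lo<..<hi}. \<forall>\<xi>. \<sigma> * \<xi> > 0 \<longrightarrow> (E (x, \<xi>) \<longlongrightarrow> \<xi> * b x) at_top"
    using ell_piece[OF xn(3) xn(2) \<sigma>(1)] by blast
  have xin: "x \<in> {lo<..<hi}" using P(1,2) by simp
  have "(E (x, \<xi>) \<longlongrightarrow> \<xi> * b x) at_top" using P(3) xin \<sigma>(2) by blast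
  then have "(E z \<longlongrightarrow> \<xi> * b x) at_top" using z by simp
  moreover have "ell z = \<xi> * b x" using calculation by (rule ell_eq)
  ultimately show ?thesis by simp
qed

definition SS :: "(real \<times> real) set" where
  "SS = {z. snd z \<noteq> 0 \<and> fst z \<notin> Kminus X}"

lemma ell_local:
  assumes z: "z \<in> SS"
  shows "\<exists>W g. open W \<and> z \<in> W \<and> W \<subseteq> SS \<and> (\<forall>n. C_n_on n W g) \<and> (\<forall>w\<in>W. ell w = g w)"
proof -
  obtain x \<xi> where zz: "z = (x, \<xi>)" by (cases z) blast
  have xn: "\<xi> \<noteq> 0" "x \<notin> Kminus X" using z zz unfolding SS_def by auto
  show ?thesis
  proof (cases "x \<in> Up")
    case True
    define W where "W = (Up \<inter> - Kminus X) \<times> (- {0::real})"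
    have oW: "open W" unfolding W_def
      by (intro open_Times open_Int Up_open open_nKminus open_Compl closed_singleton)
    have zW: "z \<in> W" using True xn unfolding zz W_def by simp
    have WS: "W \<subseteq> SS" unfolding W_def SS_def by auto
    have Cn: "\<forall>n. C_n_on n W k"
    proof
      fix n
      have "C_n_on n {z. snd z \<noteq> 0} k" using k_smooth smooth_on_def by blast
      moreover have "W \<subseteq> {z. snd z \<noteq> 0}" unfolding W_def by auto
      ultimately show "C_n_on n W k" by (rule C_n_mono)
    qed
    have eq: "\<forall>w\<in>W. ell w = k w"
    proof
      fix w assume w: "w \<in> W"
      obtain a c where wa: "w = (a, c)" by (cases w) blast
      have "a \<in> Up" "c \<noteq> 0" using w unfolding wa W_def by auto
      then show "ell w = k w" unfolding wa by (rule ell_Up)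
    qed
    show ?thesis using oW zW WS Cn eq by blast
  next
    case False
    obtain \<sigma> :: real where \<sigma>: "\<sigma> = 1 \<or> \<sigma> = -1" "\<sigma> * \<xi> > 0" using sig_choice[OF xn(1)] by blast
    obtain lo hi b where P: "lo < x" "x < hi" "\<forall>w\<in>{lo<..<hi}. X w \<noteq> 0" "\<forall>n. C_n_on n {lo<..<hi} b"
      "\<forall>x\<in>{lo<..<hi}. \<forall>\<xi>. \<sigma> * \<xi> > 0 \<longrightarrow> ell (x, \<xi>) = \<xi> * b x"
      using ell_piece[OF False xn(2) \<sigma>(1)] by blast
    define W where "W = {lo<..<hi} \<times> {\<eta>::real. 0 < \<sigma> * \<eta>}"
    have oW: "open W" unfolding W_def
      by (intro open_Times open_greaterThanLessThan open_sig)
    have zW: "z \<in> W" using P(1,2) \<sigma>(2) unfolding zz W_def by simp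
    have WS: "W \<subseteq> SS"
    proof
      fix w assume "w \<in> W"
      then have "fst w \<in> {lo<..<hi}" "0 < \<sigma> * snd w" unfolding W_def by auto
      then have "X (fst w) \<noteq> 0" "snd w \<noteq> 0" using P(3) by auto
      then show "w \<in> SS" unfolding SS_def Kminus_def by auto
    qed
    have Cn: "\<forall>n. C_n_on n W (\<lambda>w. snd w * b (fst w))"
    proof
      fix n
      have "C_n_on n {lo<..<hi} b" using P(4) by (rule spec)
      then have "C_n_on n {w :: real \<times> real. fst w \<in> {lo<..<hi}} (\<lambda>w. b (fst w))"
        by (rule C_n_fst)
      moreover have "W \<subseteq> {w :: real \<times> real. fst w \<in> {lo<..<hi}}" unfolding W_def by auto
      ultimately have "C_n_on n W (\<lambda>w. b (fst w))" by (rule C_n_mono)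
      then show "C_n_on n W (\<lambda>w. snd w * b (fst w))" by (intro C_n_mult C_n_snd)
    qed
    have eq: "\<forall>w\<in>W. ell w = snd w * b (fst w)"
    proof
      fix w assume w: "w \<in> W"
      obtain a c where wa: "w = (a, c)" by (cases w) blast
      have "a \<in> {lo<..<hi}" "\<sigma> * c > 0" using w unfolding wa W_def by auto
      then have "ell (a, c) = c * b a" using P(5) by blast
      then show "ell w = snd w * b (fst w)" unfolding wa by simp
    qed
    show ?thesis using oW zW WS Cn eq by blast
  qed
qed

lemma ell_smooth: "smooth_on SS ell"
  unfolding smooth_on_def
proof
  fix n
  show "C_n_on n SS ell"
  proof (rule C_n_local, rule ballI)
    fix z assume "z \<in> SS"
    then obtain W g where W: "open W" "z \<in> W" "W \<subseteq> SS" "\<forall>n. C_n_on n W g" "\<forall>w\<in>W. ell w = g w"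
      using ell_local by meson
    have "C_n_on n W g" using W(4) by (rule spec)
    then show "\<exists>W g. open W \<and> z \<in> W \<and> W \<subseteq> SS \<and> C_n_on n W g \<and> (\<forall>w\<in>W. ell w = g w)"
      using W(1,2,3,5) by (intro exI conjI)
  qed
qed

lemma ell_hom: "pos_homog 1 SS ell"
  unfolding pos_homog_def
proof (intro allI impI)
  fix x \<xi> c :: real assume xs: "(x, \<xi>) \<in> SS" and c: "c > 0"
  have xn: "\<xi> \<noteq> 0" "x \<notin> Kminus X" using xs unfolding SS_def by auto
  have cxn: "c * \<xi> \<noteq> 0" using xn c by simp
  have "ell (x, c * \<xi>) = c * ell (x, \<xi>)"
  proof (cases "x \<in> Up")
    case True
    have "ell (x, c * \<xi>) = k (x, c * \<xi>)" using True cxn by (rule ell_Up)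
    also have "\<dots> = c * k (x, \<xi>)" by (rule k_hom'[OF c xn(1)])
    also have "k (x, \<xi>) = ell (x, \<xi>)" using ell_Up[OF True xn(1)] by simp
    finally show ?thesis .
  next
    case False
    obtain \<sigma> :: real where \<sigma>: "\<sigma> = 1 \<or> \<sigma> = -1" "\<sigma> * \<xi> > 0" using sig_choice[OF xn(1)] by blast
    have \<sigma>c: "\<sigma> * (c * \<xi>) > 0" using \<sigma>(2) c by (metis mult.left_commute mult_pos_pos)
    obtain lo hi b where P: "lo < x" "x < hi"
      "\<forall>x\<in>{lo<..<hi}. \<forall>\<xi>. \<sigma> * \<xi> > 0 \<longrightarrow> ell (x, \<xi>) = \<xi> * b x"
      using ell_piece[OF False xn(2) \<sigma>(1)] by blast
    have xin: "x \<in> {lo<..<hi}" using P(1,2) by simp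
    have "ell (x, c * \<xi>) = c * \<xi> * b x" using P(3) xin \<sigma>c by blast
    moreover have "ell (x, \<xi>) = \<xi> * b x" using P(3) xin \<sigma>(2) by blast
    ultimately show ?thesis by simp
  qed
  then show "ell (x, c * \<xi>) = c powr 1 * ell (x, \<xi>)" using c by (simp add: powr_one)
qed

lemma ell_Kplus: "x \<in> Kplus X \<Longrightarrow> \<xi> \<noteq> 0 \<Longrightarrow> ell (x, \<xi>) = k (x, \<xi>)"
  using ell_Up Up_nbhd by blast

lemma ell_poisson:
  assumes xn: "\<xi> \<noteq> 0" "x \<notin> Kminus X"
  shows "poisson (hamH X) ell (x, \<xi>) \<ge> \<delta> / 2 * \<bar>\<xi>\<bar>"
proof -
  have pe: "poisson (hamH X) ell (x, \<xi>) =
      X x * deriv (\<lambda>y. ell (y, \<xi>)) x - \<xi> * deriv X x * deriv (\<lambda>\<eta>. ell (x, \<eta>)) \<xi>"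
    by (rule poisson_hamH[OF X_der])
  have mg: "m (x, \<xi>) \<ge> \<delta> / 2 * \<bar>\<xi>\<bar>" using m_ge xn(1) by blast
  show ?thesis
  proof (cases "x \<in> Up")
    case True
    have d1: "deriv (\<lambda>y. ell (y, \<xi>)) x = deriv (\<lambda>y. k (y, \<xi>)) x"
    proof (rule deriv_cong_ev[OF _ refl])
      have "\<forall>y\<in>Up. ell (y, \<xi>) = k (y, \<xi>)" using ell_Up xn(1) by blast
      then show "\<forall>\<^sub>F y in nhds x. ell (y, \<xi>) = k (y, \<xi>)"
        unfolding eventually_nhds using Up_open True by blast
    qed
    have d2: "deriv (\<lambda>\<eta>. ell (x, \<eta>)) \<xi> = deriv (\<lambda>\<eta>. k (x, \<eta>)) \<xi>"
    proof (rule deriv_cong_ev[OF _ refl])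
      have "\<forall>\<eta>\<in>- {0}. ell (x, \<eta>) = k (x, \<eta>)" using ell_Up True by blast
      moreover have "open (- {0::real})" "\<xi> \<in> - {0}" using xn(1) by auto
      ultimately show "\<forall>\<^sub>F \<eta> in nhds \<xi>. ell (x, \<eta>) = k (x, \<eta>)"
        unfolding eventually_nhds by blast
    qed
    have "poisson (hamH X) k (x, \<xi>) =
      X x * deriv (\<lambda>y. k (y, \<xi>)) x - \<xi> * deriv X x * deriv (\<lambda>\<eta>. k (x, \<eta>)) \<xi>"
      by (rule poisson_hamH[OF X_der])
    then have "poisson (hamH X) ell (x, \<xi>) = poisson (hamH X) k (x, \<xi>)"
      using pe d1 d2 by simp
    also have "\<dots> = m (x, \<xi>)" using m_eq True xn(1) by simp
    finally show ?thesis using mg by simp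
  next
    case False
    obtain \<sigma> :: real where \<sigma>: "\<sigma> = 1 \<or> \<sigma> = -1" "\<sigma> * \<xi> > 0" using sig_choice[OF xn(1)] by blast
    obtain lo hi b where P: "lo < x" "x < hi" "\<forall>n. C_n_on n {lo<..<hi} b"
      "\<forall>x\<in>{lo<..<hi}. \<forall>\<xi>. \<sigma> * \<xi> > 0 \<longrightarrow> ell (x, \<xi>) = \<xi> * b x"
      "\<forall>x\<in>{lo<..<hi}. \<forall>\<xi>. \<sigma> * \<xi> > 0 \<longrightarrow> X x * (\<xi> * deriv b x) - \<xi> * deriv X x * b x = m (x, \<xi>)"
      using ell_piece[OF False xn(2) \<sigma>(1)] by blast
    have xin: "x \<in> {lo<..<hi}" using P(1,2) by simp
    have "deriv (\<lambda>y. ell (y, \<xi>)) x = deriv (\<lambda>y. \<xi> * b y) x"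
    proof (rule deriv_cong_ev[OF _ refl])
      have "\<forall>y\<in>{lo<..<hi}. ell (y, \<xi>) = \<xi> * b y" using P(4) \<sigma>(2) by blast
      moreover have "open {lo<..<hi}" by simp
      ultimately show "\<forall>\<^sub>F y in nhds x. ell (y, \<xi>) = \<xi> * b y"
        unfolding eventually_nhds using xin by blast
    qed
    also have "\<dots> = \<xi> * deriv b x"
      by (rule DERIV_imp_deriv[OF DERIV_cmult[OF b_der[OF P(3) xin]]])
    finally have d1: "deriv (\<lambda>y. ell (y, \<xi>)) x = \<xi> * deriv b x" .
    have "deriv (\<lambda>\<eta>. ell (x, \<eta>)) \<xi> = deriv (\<lambda>\<eta>. \<eta> * b x) \<xi>"
    proof (rule deriv_cong_ev[OF _ refl])
      have "\<forall>\<eta>\<in>{\<eta>. 0 < \<sigma> * \<eta>}. ell (x, \<eta>) = \<eta> * b x" using P(4) xin by blast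
      moreover have "open {\<eta>::real. 0 < \<sigma> * \<eta>}" by (rule open_sig)
      moreover have "\<xi> \<in> {\<eta>. 0 < \<sigma> * \<eta>}" using \<sigma>(2) by simp
      ultimately show "\<forall>\<^sub>F \<eta> in nhds \<xi>. ell (x, \<eta>) = \<eta> * b x"
        unfolding eventually_nhds by blast
    qed
    also have "\<dots> = b x"
    proof (rule DERIV_imp_deriv)
      show "((\<lambda>\<eta>. \<eta> * b x) has_real_derivative b x) (at \<xi>)"
        using DERIV_cmult_right[OF DERIV_ident, of "b x" \<xi>] by simp
    qed
    finally have d2: "deriv (\<lambda>\<eta>. ell (x, \<eta>)) \<xi> = b x" .
    have "X x * (\<xi> * deriv b x) - \<xi> * deriv X x * b x = m (x, \<xi>)" using P(5) xin \<sigma>(2) by blast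
    then have "poisson (hamH X) ell (x, \<xi>) = m (x, \<xi>)"
      using pe d1 d2 by simp
    then show ?thesis using mg by simp
  qed
qed

lemma half_result:
  "\<exists>ell. (\<forall>z. snd z \<noteq> 0 \<and> fst z \<notin> Kminus X \<longrightarrow>
            ((\<lambda>t. k (\<Phi> t z) - sint (\<lambda>s. m (\<Phi> s z)) t) \<longlongrightarrow> ell z) at_top)
        \<and> smooth_on {z. snd z \<noteq> 0 \<and> fst z \<notin> Kminus X} ell
        \<and> pos_homog 1 {z. snd z \<noteq> 0 \<and> fst z \<notin> Kminus X} ell
        \<and> (\<forall>x \<xi>. x \<in> Kplus X \<longrightarrow> \<xi> \<noteq> 0 \<longrightarrow> ell (x, \<xi>) = k (x, \<xi>))
        \<and> (\<forall>x \<xi>. \<xi> \<noteq> 0 \<and> x \<notin> Kminus X \<longrightarrow> poisson (hamH X) ell (x, \<xi>) \<ge> \<delta> / 2 * \<bar>\<xi>\<bar>)"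
proof (rule exI[of _ ell], intro conjI allI impI)
  fix z :: "real \<times> real" assume "snd z \<noteq> 0 \<and> fst z \<notin> Kminus X"
  then have "(E z \<longlongrightarrow> ell z) at_top" using ell_lim by blast
  moreover have "E z = (\<lambda>t. k (\<Phi> t z) - sint (\<lambda>s. m (\<Phi> s z)) t)" by (simp add: E_def fun_eq_iff)
  ultimately show "((\<lambda>t. k (\<Phi> t z) - sint (\<lambda>s. m (\<Phi> s z)) t) \<longlongrightarrow> ell z) at_top" by simp
next
  show "smooth_on {z. snd z \<noteq> 0 \<and> fst z \<notin> Kminus X} ell" using ell_smooth SS_def by simp
next
  show "pos_homog 1 {z. snd z \<noteq> 0 \<and> fst z \<notin> Kminus X} ell" using ell_hom SS_def by simp
next
  fix x \<xi> :: real assume "x \<in> Kplus X" "\<xi> \<noteq> 0"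
  then show "ell (x, \<xi>) = k (x, \<xi>)" by (rule ell_Kplus)
next
  fix x \<xi> :: real assume "\<xi> \<noteq> 0 \<and> x \<notin> Kminus X"
  then show "poisson (hamH X) ell (x, \<xi>) \<ge> \<delta> / 2 * \<bar>\<xi>\<bar>" using ell_poisson by blast
qed

end

lemma sint_reflect: "sint (\<lambda>s. g (- s)) t = - sint g (- t)"
proof (cases "t \<ge> 0")
  case True
  have "integral {- 0..- (- t)} (\<lambda>x. g (- x)) = integral {- t..0} g"
    by (rule Henstock_Kurzweil_Integration.integral_reflect_real)
  then have i: "integral {0..t} (\<lambda>x. g (- x)) = integral {- t..0} g" by simp
  show ?thesis
  proof (cases "t = 0")
    case True then show ?thesis by (simp add: sint_def)
  next
    case False
    then have "\<not> 0 \<le> - t" using True by simp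
    then show ?thesis using True i by (simp add: sint_def)
  qed
next
  case False
  have "integral {- 0..- t} (\<lambda>x. g (- x)) = integral {t..0} g"
    by (rule Henstock_Kurzweil_Integration.integral_reflect_real)
  have "integral {- (- t)..- 0} (\<lambda>x. g (- x)) = integral {0..- t} g"
    by (rule Henstock_Kurzweil_Integration.integral_reflect_real)
  then have i: "integral {t..0} (\<lambda>x. g (- x)) = integral {0..- t} g" by simp
  have "0 \<le> - t" using False by simp
  then show ?thesis using False i by (simp add: sint_def)
qed

lemma poisson_neg_both:
  assumes "(X has_real_derivative X') (at x)" "(f has_derivative D) (at (x, \<xi>))"
  shows "poisson (hamH (\<lambda>x. - X x)) (\<lambda>z. - f z) (x, \<xi>) = poisson (hamH X) f (x, \<xi>)"
proof -
  have d1: "((\<lambda>x. - X x) has_real_derivative - X') (at x)" using DERIV_minus[OF assms(1)] .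
  have d2: "((\<lambda>z. - f z) has_derivative (\<lambda>h. - D h)) (at (x, \<xi>))"
    using has_derivative_minus[OF assms(2)] .
  have "poisson (hamH (\<lambda>x. - X x)) (\<lambda>z. - f z) (x, \<xi>) = - D (- X x, - \<xi> * - X')"
    using poisson_hamH_D[OF d1 d2] by simp
  also have "\<dots> = D (X x, - \<xi> * X')"
  proof -
    have lin: "linear D" using assms(2) has_derivative_linear by blast
    have "D (- (X x, - \<xi> * X')) = - D (X x, - \<xi> * X')" by (rule linear_neg[OF lin])
    then show ?thesis by simp
  qed
  also have "\<dots> = poisson (hamH X) f (x, \<xi>)" using poisson_hamH_D[OF assms] by simp
  finally show ?thesis .
qed

lemma poisson_neg_one:
  assumes "(X has_real_derivative X') (at x)" "(f has_derivative D) (at (x, \<xi>))"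
  shows "poisson (hamH X) (\<lambda>z. - f z) (x, \<xi>) = poisson (hamH (\<lambda>x. - X x)) f (x, \<xi>)"
proof -
  have d1: "((\<lambda>x. - X x) has_real_derivative - X') (at x)" using DERIV_minus[OF assms(1)] .
  have d2: "((\<lambda>z. - f z) has_derivative (\<lambda>h. - D h)) (at (x, \<xi>))"
    using has_derivative_minus[OF assms(2)] .
  have lin: "linear D" using assms(2) has_derivative_linear by blast
  have "poisson (hamH X) (\<lambda>z. - f z) (x, \<xi>) = - D (X x, - \<xi> * X')"
    using poisson_hamH_D[OF assms(1) d2] by simp
  also have "\<dots> = D (- (X x, - \<xi> * X'))" by (rule linear_neg[OF lin, symmetric])
  also have "\<dots> = poisson (hamH (\<lambda>x. - X x)) f (x, \<xi>)" using poisson_hamH_D[OF d1 assms(2)] by simp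
  finally show ?thesis .
qed

theorem mainTheorem14:
  fixes X :: "real \<Rightarrow> real"
    and \<Phi> :: "real \<Rightarrow> real \<times> real \<Rightarrow> real \<times> real"
    and Up Um :: "real set"
    and \<delta> :: real
    and k m :: "real \<times> real \<Rightarrow> real"
  assumes X_smooth: "smooth_on UNIV X"
    and X_per: "\<forall>x. X (x + 2*pi) = X x"
    and X_zero: "\<exists>x. X x = 0"
    and X_nondeg: "\<forall>x. X x = 0 \<longrightarrow> deriv X x \<noteq> 0"
    and flow: "is_flow X \<Phi>"
    and Up_open: "open Up" and Up_per: "periodic_set Up" and Up_nbhd: "Kplus X \<subseteq> Up"
    and Um_open: "open Um" and Um_per: "periodic_set Um" and Um_nbhd: "Kminus X \<subseteq> Um"
    and Up_inv: "\<forall>z t. fst z \<in> Up \<longrightarrow> t \<ge> 0 \<longrightarrow> fst (\<Phi> t z) \<in> Up"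
    and Um_inv: "\<forall>z t. fst z \<in> Um \<longrightarrow> t \<le> 0 \<longrightarrow> fst (\<Phi> t z) \<in> Um"
    and \<delta>_pos: "\<delta> > 0"
    and k_smooth: "smooth_on {z. snd z \<noteq> 0} k" and k_per: "periodic_x k"
    and k_hom: "pos_homog 1 {z. snd z \<noteq> 0} k"
    and m_smooth: "smooth_on {z. snd z \<noteq> 0} m" and m_per: "periodic_x m"
    and m_hom: "pos_homog 1 {z. snd z \<noteq> 0} m"
    and k_Gp: "\<forall>x \<xi>. x \<in> Kplus X \<longrightarrow> \<xi> \<noteq> 0 \<longrightarrow> k (x, \<xi>) = \<bar>\<xi>\<bar>"
    and k_Gm: "\<forall>x \<xi>. x \<in> Kminus X \<longrightarrow> \<xi> \<noteq> 0 \<longrightarrow> k (x, \<xi>) = - \<bar>\<xi>\<bar>"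
    and hk_pos: "\<forall>x \<xi>. x \<in> Up \<union> Um \<longrightarrow> \<xi> \<noteq> 0 \<longrightarrow> poisson (hamH X) k (x, \<xi>) \<ge> \<delta> * \<bar>\<xi>\<bar>"
    and m_eq: "\<forall>x \<xi>. x \<in> Up \<union> Um \<longrightarrow> \<xi> \<noteq> 0 \<longrightarrow> m (x, \<xi>) = poisson (hamH X) k (x, \<xi>)"
    and m_ge: "\<forall>x \<xi>. \<xi> \<noteq> 0 \<longrightarrow> m (x, \<xi>) \<ge> \<delta> / 2 * \<bar>\<xi>\<bar>"
  shows
    "(\<exists>ell. (\<forall>z. snd z \<noteq> 0 \<and> fst z \<notin> Kminus X \<longrightarrow>
            ((\<lambda>t. k (\<Phi> t z) - sint (\<lambda>s. m (\<Phi> s z)) t) \<longlongrightarrow> ell z) at_top)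
        \<and> smooth_on {z. snd z \<noteq> 0 \<and> fst z \<notin> Kminus X} ell
        \<and> pos_homog 1 {z. snd z \<noteq> 0 \<and> fst z \<notin> Kminus X} ell
        \<and> (\<forall>x \<xi>. x \<in> Kplus X \<longrightarrow> \<xi> \<noteq> 0 \<longrightarrow> ell (x, \<xi>) = k (x, \<xi>))
        \<and> (\<forall>x \<xi>. \<xi> \<noteq> 0 \<and> x \<notin> Kminus X \<longrightarrow> poisson (hamH X) ell (x, \<xi>) \<ge> \<delta> / 2 * \<bar>\<xi>\<bar>))
   \<and> (\<exists>ell. (\<forall>z. snd z \<noteq> 0 \<and> fst z \<notin> Kplus X \<longrightarrow>
            ((\<lambda>t. k (\<Phi> t z) - sint (\<lambda>s. m (\<Phi> s z)) t) \<longlongrightarrow> ell z) at_bot)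
        \<and> smooth_on {z. snd z \<noteq> 0 \<and> fst z \<notin> Kplus X} ell
        \<and> pos_homog 1 {z. snd z \<noteq> 0 \<and> fst z \<notin> Kplus X} ell
        \<and> (\<forall>x \<xi>. x \<in> Kminus X \<longrightarrow> \<xi> \<noteq> 0 \<longrightarrow> ell (x, \<xi>) = k (x, \<xi>))
        \<and> (\<forall>x \<xi>. \<xi> \<noteq> 0 \<and> x \<notin> Kplus X \<longrightarrow> poisson (hamH X) ell (x, \<xi>) \<ge> \<delta> / 2 * \<bar>\<xi>\<bar>))"
proof -
  have m_eq1: "\<forall>x \<xi>. x \<in> Up \<longrightarrow> \<xi> \<noteq> 0 \<longrightarrow> m (x, \<xi>) = poisson (hamH X) k (x, \<xi>)"
    using m_eq by blast
  interpret H1: half X \<Phi> Up \<delta> k m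
    using X_smooth X_per X_zero X_nondeg flow Up_open Up_nbhd Up_inv \<delta>_pos k_smooth k_hom
      m_smooth m_hom m_eq1 m_ge by unfold_locales
  have Xd: "\<And>x. (X has_real_derivative deriv X x) (at x)" by (rule H1.X_der)
  have dX: "deriv (\<lambda>x. - X x) x = - deriv X x" for x
    by (rule DERIV_imp_deriv[OF DERIV_minus[OF Xd]])
  have KpN: "Kplus (\<lambda>x. - X x) = Kminus X" unfolding Kplus_def Kminus_def dX by auto
  have KmN: "Kminus (\<lambda>x. - X x) = Kplus X" unfolding Kplus_def Kminus_def dX by auto
  have k_der: "\<exists>D. (k has_derivative D) (at (x, \<xi>))" if "\<xi> \<noteq> 0" for x \<xi>
    using H1.k_der[of "(x, \<xi>)"] that by simp
  have s1: "smooth_on UNIV (\<lambda>x. - X x)"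
    using X_smooth unfolding smooth_on_def by (blast intro: C_n_neg)
  have s2: "\<forall>x. - X (x + 2*pi) = - X x" using X_per by simp
  have s3: "\<exists>x. - X x = 0" using X_zero by simp
  have s4: "\<forall>x. - X x = 0 \<longrightarrow> deriv (\<lambda>x. - X x) x \<noteq> 0" using X_nondeg dX by simp
  have s5: "is_flow (\<lambda>x. - X x) (\<lambda>t z. \<Phi> (- t) z)"
    unfolding is_flow_def
  proof (intro allI conjI)
    fix z :: "real \<times> real" and t :: real
    show "\<Phi> (- 0) z = z" using H1.flow0 by simp
    have a: "(uminus has_vector_derivative (-1)) (at t)"
      using has_vector_derivative_minus[OF has_vector_derivative_id[of "at t"]] by simp
    have b: "((\<lambda>s. \<Phi> s z) has_vector_derivative hamV X (\<Phi> (- t) z)) (at (- t))"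
      by (rule H1.flow_vd)
    have "(((\<lambda>s. \<Phi> s z) \<circ> uminus) has_vector_derivative (-1) *\<^sub>R hamV X (\<Phi> (- t) z)) (at t)"
      using vector_diff_chain_at[OF a] b by simp
    moreover have "(-1) *\<^sub>R hamV X (\<Phi> (- t) z) = hamV (\<lambda>x. - X x) (\<Phi> (- t) z)"
      unfolding hamV_def dX by simp
    ultimately show "((\<lambda>s. \<Phi> (- s) z) has_vector_derivative hamV (\<lambda>x. - X x) (\<Phi> (- t) z)) (at t)"
      by (simp add: o_def)
  qed
  have s6: "Kplus (\<lambda>x. - X x) \<subseteq> Um" using KpN Um_nbhd by simp
  have s7: "\<forall>z t. fst z \<in> Um \<longrightarrow> t \<ge> 0 \<longrightarrow> fst (\<Phi> (- t) z) \<in> Um"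
    using Um_inv by simp
  have s8: "smooth_on {z. snd z \<noteq> 0} (\<lambda>z. - k z)"
    using k_smooth unfolding smooth_on_def by (blast intro: C_n_neg)
  have s9: "pos_homog 1 {z. snd z \<noteq> 0} (\<lambda>z. - k z)"
    using k_hom unfolding pos_homog_def by simp
  have s10: "\<forall>x \<xi>. x \<in> Um \<longrightarrow> \<xi> \<noteq> 0 \<longrightarrow> m (x, \<xi>) = poisson (hamH (\<lambda>x. - X x)) (\<lambda>z. - k z) (x, \<xi>)"
  proof (intro allI impI)
    fix x \<xi> :: real assume x: "x \<in> Um" and xn: "\<xi> \<noteq> 0"
    obtain D where D: "(k has_derivative D) (at (x, \<xi>))" using k_der[OF xn] by blast
    have "poisson (hamH (\<lambda>x. - X x)) (\<lambda>z. - k z) (x, \<xi>) = poisson (hamH X) k (x, \<xi>)"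
      by (rule poisson_neg_both[OF Xd D])
    then show "m (x, \<xi>) = poisson (hamH (\<lambda>x. - X x)) (\<lambda>z. - k z) (x, \<xi>)"
      using m_eq x xn by simp
  qed
  interpret H2: half "\<lambda>x. - X x" "\<lambda>t z. \<Phi> (- t) z" Um \<delta> "\<lambda>z. - k z" m
    using s1 s2 s3 s4 s5 Um_open s6 s7 \<delta>_pos s8 s9 m_smooth m_hom s10 m_ge by unfold_locales
  have part1: "\<exists>ell. (\<forall>z. snd z \<noteq> 0 \<and> fst z \<notin> Kminus X \<longrightarrow>
            ((\<lambda>t. k (\<Phi> t z) - sint (\<lambda>s. m (\<Phi> s z)) t) \<longlongrightarrow> ell z) at_top)
        \<and> smooth_on {z. snd z \<noteq> 0 \<and> fst z \<notin> Kminus X} ell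
        \<and> pos_homog 1 {z. snd z \<noteq> 0 \<and> fst z \<notin> Kminus X} ell
        \<and> (\<forall>x \<xi>. x \<in> Kplus X \<longrightarrow> \<xi> \<noteq> 0 \<longrightarrow> ell (x, \<xi>) = k (x, \<xi>))
        \<and> (\<forall>x \<xi>. \<xi> \<noteq> 0 \<and> x \<notin> Kminus X \<longrightarrow> poisson (hamH X) ell (x, \<xi>) \<ge> \<delta> / 2 * \<bar>\<xi>\<bar>)"
    by (rule H1.half_result)
  obtain ell' where E2:
    "\<forall>z. snd z \<noteq> 0 \<and> fst z \<notin> Kminus (\<lambda>x. - X x) \<longrightarrow>
       ((\<lambda>t. - k (\<Phi> (- t) z) - sint (\<lambda>s. m (\<Phi> (- s) z)) t) \<longlongrightarrow> ell' z) at_top"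
    "smooth_on {z. snd z \<noteq> 0 \<and> fst z \<notin> Kminus (\<lambda>x. - X x)} ell'"
    "pos_homog 1 {z. snd z \<noteq> 0 \<and> fst z \<notin> Kminus (\<lambda>x. - X x)} ell'"
    "\<forall>x \<xi>. x \<in> Kplus (\<lambda>x. - X x) \<longrightarrow> \<xi> \<noteq> 0 \<longrightarrow> ell' (x, \<xi>) = - k (x, \<xi>)"
    "\<forall>x \<xi>. \<xi> \<noteq> 0 \<and> x \<notin> Kminus (\<lambda>x. - X x) \<longrightarrow>
       poisson (hamH (\<lambda>x. - X x)) ell' (x, \<xi>) \<ge> \<delta> / 2 * \<bar>\<xi>\<bar>"
    using H2.half_result by blast
  let ?S = "{z. snd z \<noteq> 0 \<and> fst z \<notin> Kplus X}"
  have SS: "{z. snd z \<noteq> 0 \<and> fst z \<notin> Kminus (\<lambda>x. - X x)} = ?S" using KmN by simp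
  have part2: "\<exists>ell. (\<forall>z. snd z \<noteq> 0 \<and> fst z \<notin> Kplus X \<longrightarrow>
            ((\<lambda>t. k (\<Phi> t z) - sint (\<lambda>s. m (\<Phi> s z)) t) \<longlongrightarrow> ell z) at_bot)
        \<and> smooth_on ?S ell
        \<and> pos_homog 1 ?S ell
        \<and> (\<forall>x \<xi>. x \<in> Kminus X \<longrightarrow> \<xi> \<noteq> 0 \<longrightarrow> ell (x, \<xi>) = k (x, \<xi>))
        \<and> (\<forall>x \<xi>. \<xi> \<noteq> 0 \<and> x \<notin> Kplus X \<longrightarrow> poisson (hamH X) ell (x, \<xi>) \<ge> \<delta> / 2 * \<bar>\<xi>\<bar>)"
  proof (rule exI[of _ "\<lambda>z. - ell' z"], intro conjI allI impI)
    fix z :: "real \<times> real" assume z: "snd z \<noteq> 0 \<and> fst z \<notin> Kplus X"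
    then have "snd z \<noteq> 0 \<and> fst z \<notin> Kminus (\<lambda>x. - X x)" using KmN by simp
    then have "((\<lambda>t. - k (\<Phi> (- t) z) - sint (\<lambda>s. m (\<Phi> (- s) z)) t) \<longlongrightarrow> ell' z) at_top"
      using E2(1) by blast
    then have "((\<lambda>t. - (- k (\<Phi> (- t) z) - sint (\<lambda>s. m (\<Phi> (- s) z)) t)) \<longlongrightarrow> - ell' z) at_top"
      by (rule tendsto_minus)
    moreover have "- (- k (\<Phi> (- t) z) - sint (\<lambda>s. m (\<Phi> (- s) z)) t)
        = k (\<Phi> (- t) z) - sint (\<lambda>s. m (\<Phi> s z)) (- t)" for t
      using sint_reflect[of "\<lambda>s. m (\<Phi> s z)" t] by simp
    ultimately have "((\<lambda>t. k (\<Phi> (- t) z) - sint (\<lambda>s. m (\<Phi> s z)) (- t)) \<longlongrightarrow> - ell' z) at_top"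
      by simp
    then show "((\<lambda>t. k (\<Phi> t z) - sint (\<lambda>s. m (\<Phi> s z)) t) \<longlongrightarrow> - ell' z) at_bot"
      unfolding filterlim_at_bot_mirror by simp
  next
    show "smooth_on ?S (\<lambda>z. - ell' z)"
      using E2(2) unfolding SS smooth_on_def by (blast intro: C_n_neg)
  next
    show "pos_homog 1 ?S (\<lambda>z. - ell' z)"
      using E2(3) unfolding SS pos_homog_def by simp
  next
    fix x \<xi> :: real assume "x \<in> Kminus X" "\<xi> \<noteq> 0"
    then show "- ell' (x, \<xi>) = k (x, \<xi>)" using E2(4) KpN by simp
  next
    fix x \<xi> :: real assume xn: "\<xi> \<noteq> 0 \<and> x \<notin> Kplus X"
    have "(x, \<xi>) \<in> ?S" using xn by simp
    then obtain D where D: "(ell' has_derivative D) (at (x, \<xi>))"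
      using E2(2) unfolding SS smooth_on_def
      by (metis (no_types, lifting) C_n_on.simps(2) One_nat_def)
    have "poisson (hamH X) (\<lambda>z. - ell' z) (x, \<xi>) = poisson (hamH (\<lambda>x. - X x)) ell' (x, \<xi>)"
      by (rule poisson_neg_one[OF Xd D])
    moreover have "poisson (hamH (\<lambda>x. - X x)) ell' (x, \<xi>) \<ge> \<delta> / 2 * \<bar>\<xi>\<bar>"
      using E2(5) xn KmN by simp
    ultimately show "poisson (hamH X) (\<lambda>z. - ell' z) (x, \<xi>) \<ge> \<delta> / 2 * \<bar>\<xi>\<bar>" by simp
  qed
  show ?thesis using part1 part2 by blast
qed

end
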